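(* Let $q\ge 2$ be an integer, $s\in(0,2)$, and let $P(x,t)=|\Psi(x,t)|^2$ be as in the context. Then for Lebesgue-almost every $x\in[0,\pi]$ the graph of $t\mapsto P(x,t)$ over any compact interval $[a,b]$ with $a<b$ has box-counting dimension $D_t=1+s/2$.
   Context: For an integer $q\ge2$ and $s\in(0,2)$ define, for $x\in[0,\pi]$ and $t\in\mathbb R$, $$\Psi(x,t)=N\sum_{n=0}^{\infty} q^{n(s-2)}\sin(q^n x)\,e^{-i q^{2n} t},\qquad N=\sqrt{\tfrac{2}{\pi}\big(1-q^{2(s-2)}\big)},$$ a uniformly convergent series. Let $P(x,t)=|\Psi(x,t)|^2$. For a bounded set $A\subset\mathbb R^d$ let $N(\delta)$ be the number of cubes $[m_1\delta,(m_1+1)\delta]\times\dots\times[m_d\delta,(m_d+1)\delta]$, $m_i\in\mathbb Z$, meeting $A$. The upper and lower box-counting dimensions are $\limsup_{\delta\to0}$ and $\liminf_{\delta\to0}$ of $\ln N(\delta)/\ln(1/\delta)$. The box-counting dimension exists when these two coincide, and is then their common value. *)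

theory Defs
  imports "HOL-Analysis.Analysis"
begin

definition NormConst :: "nat \<Rightarrow> real \<Rightarrow> real" where
  "NormConst q s = sqrt (2 / pi * (1 - real q powr (2 * (s - 2))))"

definition Psi :: "nat \<Rightarrow> real \<Rightarrow> real \<Rightarrow> real \<Rightarrow> complex" where
  "Psi q s x t = complex_of_real (NormConst q s) *
     (\<Sum>n. complex_of_real (real q powr (real n * (s - 2)) * sin (real q ^ n * x))
            * cis (- (real q ^ (2 * n) * t)))"

definition Pdens :: "nat \<Rightarrow> real \<Rightarrow> real \<Rightarrow> real \<Rightarrow> real" where
  "Pdens q s x t = (cmod (Psi q s x t))\<^sup>2"

definition box_count :: "real \<Rightarrow> (real \<times> real) set \<Rightarrow> nat" where
  "box_count \<delta> A = card {m :: int \<times> int. \<exists>(u, v) \<in> A.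
      of_int (fst m) * \<delta> \<le> u \<and> u \<le> (of_int (fst m) + 1) * \<delta> \<and>
      of_int (snd m) * \<delta> \<le> v \<and> v \<le> (of_int (snd m) + 1) * \<delta>}"

definition upper_box_dim :: "(real \<times> real) set \<Rightarrow> ereal" where
  "upper_box_dim A = Limsup (at_right 0)
     (\<lambda>\<delta>. ereal (ln (real (box_count \<delta> A)) / ln (1 / \<delta>)))"

definition lower_box_dim :: "(real \<times> real) set \<Rightarrow> ereal" where
  "lower_box_dim A = Liminf (at_right 0)
     (\<lambda>\<delta>. ereal (ln (real (box_count \<delta> A)) / ln (1 / \<delta>)))"

definition has_box_dim :: "(real \<times> real) set \<Rightarrow> real \<Rightarrow> bool" where
  "has_box_dim A D \<longleftrightarrow> upper_box_dim A = ereal D \<and> lower_box_dim A = ereal D"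

end

theory Submission
  imports Defs
begin


lemma cis_diff_le: "norm (cis a - cis b) \<le> \<bar>a - b\<bar>"
proof -
  have e: "cis b * cis (a - b) = cis a" by (simp add: cis_mult)
  have "cis a - cis b = cis b * (cis (a - b) - 1)"
    by (simp add: algebra_simps e)
  hence "norm (cis a - cis b) = norm (cis (a - b) - 1)" by (simp add: norm_mult)
  also have "\<dots> = 2 * \<bar>sin ((a - b) / 2)\<bar>"
    using dist_exp_i_1[of "a-b"] by (simp add: cis_conv_exp mult.commute)
  also have "\<dots> \<le> 2 * \<bar>(a - b)/2\<bar>" using abs_sin_x_le_abs_x[of "(a-b)/2"] by linarith
  finally show ?thesis by simp
qed

lemma cis_diff_le2: "norm (cis a - cis b) \<le> 2"
  using norm_triangle_ineq4[of "cis a" "cis b"] by simp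

lemma min2_powr: fixes y :: real assumes "0 \<le> y" "0 < \<beta>" "\<beta> \<le> 1" shows "min 2 y \<le> 2 * y powr \<beta>"
proof (cases "y \<ge> 1")
  case True
  have "1 \<le> y powr \<beta>" by (rule ge_one_powr_ge_zero[OF True]) (use assms in simp)
  then show ?thesis by linarith
next
  case False
  show ?thesis
  proof (cases "y = 0")
    case True then show ?thesis by simp
  next
    case F2: False
    have "y powr 1 \<le> y powr \<beta>" using False F2 assms by (intro powr_mono') auto
    thus ?thesis using assms by simp
  qed
qed


definition rq :: "nat \<Rightarrow> real \<Rightarrow> real" where "rq q s = real q powr (s - 2)"
definition cf :: "nat \<Rightarrow> real \<Rightarrow> real \<Rightarrow> nat \<Rightarrow> real" where
  "cf q s x n = real q powr (real n * (s - 2)) * sin (real q ^ n * x)"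
definition ef :: "nat \<Rightarrow> nat \<Rightarrow> real \<Rightarrow> complex" where
  "ef q n t = cis (- (real q ^ (2 * n) * t))"

context
  fixes q :: nat and s :: real
  assumes q2: "2 \<le> q" and s0: "0 < s" and s2: "s < 2"
begin

lemma q_pos: "0 < real q" using q2 by simp
lemma q_ge2: "2 \<le> real q" using q2 by simp

lemma r_pos: "0 < rq q s" unfolding rq_def using q_pos by simp
lemma r_lt1: "rq q s < 1"
  unfolding rq_def using q_ge2 s2 by (intro powr_less_one) auto

lemma powr_r: "real q powr (real n * (s - 2)) = (rq q s) ^ n"
  unfolding rq_def using q_pos
  by (simp add: powr_realpow[symmetric] powr_powr mult.commute)

lemma cf_eq: "cf q s x n = (rq q s) ^ n * sin (real q ^ n * x)"
  unfolding cf_def powr_r ..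

lemma cf_bound: "\<bar>cf q s x n\<bar> \<le> (rq q s) ^ n"
proof -
  have "\<bar>cf q s x n\<bar> = (rq q s) ^ n * \<bar>sin (real q ^ n * x)\<bar>"
    unfolding cf_eq using r_pos by (simp add: abs_mult)
  also have "\<dots> \<le> (rq q s) ^ n * 1"
    using r_pos by (intro mult_left_mono) auto
  finally show ?thesis by simp
qed

lemma norm_ef [simp]: "norm (ef q n t) = 1" unfolding ef_def by simp

definition AA :: real where "AA = 1 / (1 - rq q s)"

lemma AA_pos: "0 < AA" unfolding AA_def using r_lt1 by simp
lemma AA_ge1: "1 \<le> AA" unfolding AA_def using r_lt1 r_pos by (simp add: field_simps)

lemma sums_r: "(\<lambda>n. (rq q s) ^ n) sums AA"
  unfolding AA_def using r_pos r_lt1 by (intro geometric_sums) simp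

lemma summable_r: "summable (\<lambda>n. (rq q s) ^ n)" using sums_r sums_summable by blast

lemma sum_r_le: "(\<Sum>n\<in>F. (rq q s) ^ n) \<le> AA" if "finite F"
  using sums_r r_pos that
  by (metis sum_le_suminf sums_unique summable_r zero_le_power less_imp_le)

lemma sum_cf_le: "finite F \<Longrightarrow> (\<Sum>n\<in>F. \<bar>cf q s x n\<bar>) \<le> AA"
  by (rule order.trans[OF sum_mono[OF cf_bound] sum_r_le])

lemma summable_terms: "summable (\<lambda>n. complex_of_real (cf q s x n) * ef q n t)"
  by (rule summable_norm_cancel, rule summable_comparison_test[OF _ summable_r])
     (auto simp: norm_mult cf_bound)

lemma Psi_eq: "Psi q s x t = complex_of_real (NormConst q s) * (\<Sum>n. complex_of_real (cf q s x n) * ef q n t)"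
  unfolding Psi_def cf_def ef_def ..

lemma N_pos: "0 < NormConst q s"
proof -
  have "real q powr (2 * (s - 2)) < 1" using q_ge2 s2 by (intro powr_less_one) auto
  thus ?thesis unfolding NormConst_def by simp
qed

lemma N_nonneg: "0 \<le> NormConst q s" using N_pos by simp

definition BB :: real where "BB = NormConst q s * AA"

lemma BB_nonneg: "0 \<le> BB" unfolding BB_def using N_nonneg AA_pos by simp

lemma norm_series_le: "norm (\<Sum>n. complex_of_real (cf q s x n) * ef q n t) \<le> AA"
proof -
  have "norm (\<Sum>n. complex_of_real (cf q s x n) * ef q n t) \<le> (\<Sum>n. (rq q s) ^ n)"
  proof -
    have sn: "summable (\<lambda>n. norm (complex_of_real (cf q s x n) * ef q n t))"
      by (rule summable_comparison_test[OF _ summable_r]) (auto simp: norm_mult cf_bound)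
    have "norm (\<Sum>n. complex_of_real (cf q s x n) * ef q n t) \<le> (\<Sum>n. norm (complex_of_real (cf q s x n) * ef q n t))"
      by (rule summable_norm[OF sn])
    also have "\<dots> \<le> (\<Sum>n. (rq q s) ^ n)"
      by (rule suminf_le[OF _ sn summable_r]) (auto simp: norm_mult cf_bound)
    finally show ?thesis .
  qed
  thus ?thesis using sums_r sums_unique by metis
qed

lemma norm_Psi: "norm (Psi q s x t) \<le> BB"
  unfolding Psi_eq BB_def norm_mult using N_nonneg norm_series_le
  by (auto intro: mult_left_mono)

end


context
  fixes q :: nat and s :: real
  assumes q2: "2 \<le> q" and s0: "0 < s" and s2: "s < 2"
begin

lemma ef_diff: "norm (ef q n t - ef q n t') \<le> 2 * (real q ^ (2*n) * \<bar>t - t'\<bar>) powr \<beta>"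
  if "0 < \<beta>" "\<beta> \<le> 1"
proof -
  have "norm (ef q n t - ef q n t') \<le> min 2 (real q ^ (2*n) * \<bar>t - t'\<bar>)"
  proof -
    have "norm (ef q n t - ef q n t') \<le> \<bar>- (real q ^ (2 * n) * t) - - (real q ^ (2 * n) * t')\<bar>"
      unfolding ef_def by (rule cis_diff_le)
    also have "\<dots> = \<bar>real q ^ (2*n) * (t' - t)\<bar>" by (simp add: algebra_simps)
    also have "\<dots> = real q ^ (2*n) * \<bar>t - t'\<bar>" by (simp add: abs_mult abs_minus_commute)
    finally show ?thesis using cis_diff_le2 unfolding ef_def by simp
  qed
  also have "\<dots> \<le> 2 * (real q ^ (2*n) * \<bar>t - t'\<bar>) powr \<beta>"
    by (rule min2_powr) (use that in auto)
  finally show ?thesis .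
qed

lemma holder_Psi:
  assumes b0: "0 < \<beta>" and b1: "\<beta> < 1 - s/2"
  shows "norm (Psi q s x t - Psi q s x t') \<le>
     NormConst q s * 2 / (1 - rq q s * real q powr (2*\<beta>)) * \<bar>t - t'\<bar> powr \<beta>"
proof -
  define g where "g = rq q s * real q powr (2*\<beta>)"
  have g0: "0 < g" unfolding g_def using r_pos[OF q2 s0 s2] q_pos[OF q2 s0 s2] by simp
  have g1: "g < 1"
  proof -
    have "g = real q powr (s - 2 + 2*\<beta>)" unfolding g_def rq_def by (simp add: powr_add)
    also have "\<dots> < 1" using q_ge2[OF q2 s0 s2] b1 by (intro powr_less_one) auto
    finally show ?thesis .
  qed
  have b1': "\<beta> \<le> 1" using b1 s0 by simp
  let ?h = "\<bar>t - t'\<bar>"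
  define F where "F = (\<lambda>n. complex_of_real (cf q s x n) * (ef q n t - ef q n t'))"
  have S1: "summable (\<lambda>n. complex_of_real (cf q s x n) * ef q n t)" by (rule summable_terms[OF q2 s0 s2])
  have S2: "summable (\<lambda>n. complex_of_real (cf q s x n) * ef q n t')" by (rule summable_terms[OF q2 s0 s2])
  have diff: "(\<Sum>n. complex_of_real (cf q s x n) * ef q n t) - (\<Sum>n. complex_of_real (cf q s x n) * ef q n t') = (\<Sum>n. F n)"
    unfolding F_def using suminf_diff[OF S1 S2] by (simp add: algebra_simps)
  have bnd: "norm (F n) \<le> 2 * ?h powr \<beta> * g ^ n" for n
  proof -
    have "norm (F n) \<le> (rq q s) ^ n * (2 * (real q ^ (2*n) * ?h) powr \<beta>)"
      unfolding F_def norm_mult using cf_bound[OF q2 s0 s2] ef_diff[OF b0 b1'] r_pos[OF q2 s0 s2]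
      by (intro mult_mono) auto
    also have "(real q ^ (2*n) * ?h) powr \<beta> = (real q powr (2*\<beta>)) ^ n * ?h powr \<beta>"
    proof -
      have "(real q ^ (2*n)) powr \<beta> = (real q powr (2*\<beta>)) ^ n"
        using q_pos[OF q2 s0 s2]
        by (simp add: powr_realpow[symmetric] powr_powr mult.commute mult.left_commute)
      thus ?thesis by (simp add: powr_mult)
    qed
    finally show ?thesis unfolding g_def by (simp add: power_mult_distrib algebra_simps)
  qed
  have sg: "summable (\<lambda>n. 2 * ?h powr \<beta> * g ^ n)"
    using g0 g1 by (intro summable_mult summable_geometric) auto
  have sF: "summable (\<lambda>n. norm (F n))"
    by (rule summable_comparison_test[OF _ sg]) (use bnd in auto)
  have "norm (\<Sum>n. F n) \<le> (\<Sum>n. norm (F n))" by (rule summable_norm[OF sF])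
  also have "\<dots> \<le> (\<Sum>n. 2 * ?h powr \<beta> * g ^ n)" by (rule suminf_le[OF bnd sF sg])
  also have "\<dots> = 2 * ?h powr \<beta> * (1 / (1 - g))"
    using g0 g1 by (subst suminf_mult) (auto simp: suminf_geometric)
  finally have "norm (\<Sum>n. F n) \<le> 2 * ?h powr \<beta> / (1 - g)" by simp
  hence "NormConst q s * norm (\<Sum>n. F n) \<le> NormConst q s * (2 * ?h powr \<beta> / (1 - g))"
    using N_nonneg[OF q2 s0 s2] by (intro mult_left_mono)
  moreover have "Psi q s x t - Psi q s x t' = complex_of_real (NormConst q s) * (\<Sum>n. F n)"
    unfolding Psi_eq[OF q2 s0 s2] diff[symmetric] by (simp add: algebra_simps)
  ultimately show ?thesis unfolding g_def using N_nonneg[OF q2 s0 s2]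
    by (simp add: norm_mult)
qed

lemma holder_P:
  assumes b0: "0 < \<beta>" and b1: "\<beta> < 1 - s/2"
  shows "\<bar>Pdens q s x t - Pdens q s x t'\<bar> \<le>
     2 * BB q s * (NormConst q s * 2 / (1 - rq q s * real q powr (2*\<beta>))) * \<bar>t - t'\<bar> powr \<beta>"
proof -
  let ?a = "Psi q s x t" and ?b = "Psi q s x t'"
  have "\<bar>Pdens q s x t - Pdens q s x t'\<bar> = \<bar>(norm ?a + norm ?b) * (norm ?a - norm ?b)\<bar>"
    unfolding Pdens_def by (simp add: power2_eq_square algebra_simps)
  also have "\<dots> = (norm ?a + norm ?b) * \<bar>norm ?a - norm ?b\<bar>" by (simp add: abs_mult)
  also have "\<dots> \<le> (2 * BB q s) * norm (?a - ?b)"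
    using norm_Psi[OF q2 s0 s2, of x t] norm_Psi[OF q2 s0 s2, of x t'] norm_triangle_ineq3[of ?a ?b]
      BB_nonneg[OF q2 s0 s2] by (intro mult_mono) auto
  also have "\<dots> \<le> (2 * BB q s) * (NormConst q s * 2 / (1 - rq q s * real q powr (2*\<beta>)) * \<bar>t - t'\<bar> powr \<beta>)"
    using holder_Psi[OF b0 b1] BB_nonneg[OF q2 s0 s2] by (intro mult_left_mono) auto
  finally show ?thesis by simp
qed

end


lemma cis_has_integral:
  assumes "\<alpha> \<le> \<beta>" "\<xi> \<noteq> 0"
  shows "((\<lambda>t. cis (\<xi> * t)) has_integral ((cis (\<xi> * \<beta>) - cis (\<xi> * \<alpha>)) / (\<i> * complex_of_real \<xi>))) {\<alpha>..\<beta>}"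
proof -
  have d: "((\<lambda>t. cis (\<xi> * t) / (\<i> * complex_of_real \<xi>)) has_vector_derivative cis (\<xi> * t)) (at t within {\<alpha>..\<beta>})" for t
  proof -
    have "((\<lambda>t. cis (\<xi> * t)) has_derivative (\<lambda>h. (\<xi> * h) *\<^sub>R (\<i> * cis (\<xi> * t)))) (at t within {\<alpha>..\<beta>})"
      by (intro has_derivative_cis derivative_intros)
    hence "((\<lambda>t. cis (\<xi> * t)) has_vector_derivative (\<xi> *\<^sub>R (\<i> * cis (\<xi> * t)))) (at t within {\<alpha>..\<beta>})"
      unfolding has_vector_derivative_def by (simp add: algebra_simps)
    hence "((\<lambda>t. cis (\<xi> * t) / (\<i> * complex_of_real \<xi>)) has_vector_derivative (\<xi> *\<^sub>R (\<i> * cis (\<xi> * t))) / (\<i> * complex_of_real \<xi>)) (at t within {\<alpha>..\<beta>})"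
      by (rule has_vector_derivative_divide)
    moreover have "(\<xi> *\<^sub>R (\<i> * cis (\<xi> * t))) / (\<i> * complex_of_real \<xi>) = cis (\<xi> * t)"
      using assms(2) by (simp add: scaleR_conv_of_real field_simps)
    ultimately show ?thesis by simp
  qed
  have "((\<lambda>t. cis (\<xi> * t)) has_integral (cis (\<xi> * \<beta>) / (\<i> * complex_of_real \<xi>) - cis (\<xi> * \<alpha>) / (\<i> * complex_of_real \<xi>))) {\<alpha>..\<beta>}"
    by (rule fundamental_theorem_of_calculus[OF assms(1)]) (use d in auto)
  thus ?thesis by (simp add: diff_divide_distrib)
qed

lemma cis_integral_bound:
  assumes "\<alpha> \<le> \<beta>" "\<xi> \<noteq> 0"
  shows "norm (integral {\<alpha>..\<beta>} (\<lambda>t. cis (\<xi> * t))) \<le> 2 / \<bar>\<xi>\<bar>"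
proof -
  have "integral {\<alpha>..\<beta>} (\<lambda>t. cis (\<xi> * t)) = (cis (\<xi> * \<beta>) - cis (\<xi> * \<alpha>)) / (\<i> * complex_of_real \<xi>)"
    using cis_has_integral[OF assms] by (rule integral_unique)
  also have "norm \<dots> = norm (cis (\<xi> * \<beta>) - cis (\<xi> * \<alpha>)) / \<bar>\<xi>\<bar>"
    by (simp add: norm_divide norm_mult)
  also have "\<dots> \<le> 2 / \<bar>\<xi>\<bar>"
    using cis_diff_le2 by (intro divide_right_mono) auto
  finally show ?thesis .
qed

lemma cis_integral_zero:
  assumes "\<alpha> \<le> \<beta>"
  shows "integral {\<alpha>..\<beta>} (\<lambda>t. cis (0 * t)) = complex_of_real (\<beta> - \<alpha>)"
  using assms by (simp add: scaleR_conv_of_real)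

lemma cis_integral_period:
  assumes "0 < \<delta>" "\<omega> * \<delta> = 2 * pi"
  shows "integral {c..c + \<delta>} (\<lambda>t. cis (\<omega> * t)) = 0"
proof -
  have w: "\<omega> \<noteq> 0" using assms by auto
  have "cis (\<omega> * (c + \<delta>)) = cis (\<omega> * c)"
    using assms(2) by (simp add: distrib_left cis_mult[symmetric])
  thus ?thesis using integral_unique[OF cis_has_integral[of c "c+\<delta>" \<omega>]] assms w by simp
qed


definition box_set :: "real \<Rightarrow> (real \<times> real) set \<Rightarrow> (int \<times> int) set" where
  "box_set \<delta> A = {m :: int \<times> int. \<exists>(u, v) \<in> A.
      of_int (fst m) * \<delta> \<le> u \<and> u \<le> (of_int (fst m) + 1) * \<delta> \<and>
      of_int (snd m) * \<delta> \<le> v \<and> v \<le> (of_int (snd m) + 1) * \<delta>}"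

lemma box_count_eq: "box_count \<delta> A = card (box_set \<delta> A)"
  unfolding box_count_def box_set_def ..

lemma mem_box_graph:
  "(m1, m2) \<in> box_set \<delta> ((\<lambda>t. (t, f t)) ` S) \<longleftrightarrow>
    (\<exists>t\<in>S. of_int m1 * \<delta> \<le> t \<and> t \<le> (of_int m1 + 1) * \<delta> \<and>
       of_int m2 * \<delta> \<le> f t \<and> f t \<le> (of_int m2 + 1) * \<delta>)"
  unfolding box_set_def by auto

lemma int_card_upper:
  assumes "x \<le> y + 1"
  shows "real (card {\<lceil>x\<rceil>..\<lfloor>y\<rfloor>}) \<le> y - x + 1"
proof -
  have "card {\<lceil>x\<rceil>..\<lfloor>y\<rfloor>} = nat (\<lfloor>y\<rfloor> - \<lceil>x\<rceil> + 1)" by simp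
  moreover have "real_of_int (\<lfloor>y\<rfloor> - \<lceil>x\<rceil> + 1) \<le> y - x + 1"
    using of_int_floor_le[of y] le_of_int_ceiling[of x] by linarith
  ultimately show ?thesis using assms by (cases "\<lfloor>y\<rfloor> - \<lceil>x\<rceil> + 1 \<ge> 0") auto
qed

lemma int_card_upper2:
  assumes "x \<le> y + 2"
  shows "real (card {\<lceil>x\<rceil> - 1..\<lfloor>y\<rfloor>}) \<le> y - x + 2"
proof -
  have "card {\<lceil>x\<rceil> - 1..\<lfloor>y\<rfloor>} = nat (\<lfloor>y\<rfloor> - \<lceil>x\<rceil> + 2)" by simp
  moreover have "real_of_int (\<lfloor>y\<rfloor> - \<lceil>x\<rceil> + 2) \<le> y - x + 2"
    using of_int_floor_le[of y] le_of_int_ceiling[of x] by linarith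
  ultimately show ?thesis using assms by (cases "\<lfloor>y\<rfloor> - \<lceil>x\<rceil> + 2 \<ge> 0") auto
qed

lemma int_card_lower:
  shows "y - x - 1 \<le> real (card {\<lceil>x\<rceil>..\<lfloor>y\<rfloor>})"
proof -
  have "card {\<lceil>x\<rceil>..\<lfloor>y\<rfloor>} = nat (\<lfloor>y\<rfloor> - \<lceil>x\<rceil> + 1)" by simp
  moreover have "y - x - 1 \<le> real_of_int (\<lfloor>y\<rfloor> - \<lceil>x\<rceil> + 1)"
    using real_of_int_floor_gt_diff_one[of y] of_int_ceiling_le_add_one[of x] by linarith
  ultimately show ?thesis by (cases "\<lfloor>y\<rfloor> - \<lceil>x\<rceil> + 1 \<ge> 0") auto
qed

lemma box_upper:
  fixes f :: "real \<Rightarrow> real"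
  assumes d0: "0 < \<delta>" and ab: "a \<le> b" and h0: "0 \<le> h"
    and H: "\<And>t t'. \<bar>t - t'\<bar> \<le> \<delta> \<Longrightarrow> \<bar>f t - f t'\<bar> \<le> h"
  shows "finite (box_set \<delta> ((\<lambda>t. (t, f t)) ` {a..b}))"
    and "real (card (box_set \<delta> ((\<lambda>t. (t, f t)) ` {a..b}))) \<le> ((b - a) / \<delta> + 2) * (2 * h / \<delta> + 2)"
proof -
  define R1 where "R1 = {\<lceil>a/\<delta>\<rceil> - 1..\<lfloor>b/\<delta>\<rfloor>}"
  define R2 where "R2 = (\<lambda>m1::int. {\<lceil>(f (of_int m1 * \<delta>) - h)/\<delta>\<rceil> - 1..\<lfloor>(f (of_int m1 * \<delta>) + h)/\<delta>\<rfloor>})"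
  have sub: "box_set \<delta> ((\<lambda>t. (t, f t)) ` {a..b}) \<subseteq> Sigma R1 R2"
  proof
    fix m assume "m \<in> box_set \<delta> ((\<lambda>t. (t, f t)) ` {a..b})"
    then obtain m1 m2 where m: "m = (m1, m2)" and "(m1, m2) \<in> box_set \<delta> ((\<lambda>t. (t, f t)) ` {a..b})"
      by (cases m) auto
    then obtain t where t: "t \<in> {a..b}" "of_int m1 * \<delta> \<le> t" "t \<le> (of_int m1 + 1) * \<delta>"
       "of_int m2 * \<delta> \<le> f t" "f t \<le> (of_int m2 + 1) * \<delta>"
      unfolding mem_box_graph by blast
    have "of_int m1 \<le> b / \<delta>" using t d0 by (simp add: field_simps)
    moreover have "a / \<delta> \<le> of_int (m1 + 1)" using t d0 by (simp add: field_simps)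
    ultimately have m1: "m1 \<in> R1" unfolding R1_def
      by (simp add: le_floor_iff ceiling_le_iff del: of_int_add) linarith
    have "\<bar>t - of_int m1 * \<delta>\<bar> \<le> \<delta>" using t by (simp add: algebra_simps)
    hence ft: "\<bar>f t - f (of_int m1 * \<delta>)\<bar> \<le> h" by (rule H)
    have "of_int m2 \<le> (f (of_int m1 * \<delta>) + h)/\<delta>" using t ft d0 by (simp add: field_simps)
    moreover have "(f (of_int m1 * \<delta>) - h)/\<delta> \<le> of_int (m2 + 1)" using t ft d0 by (simp add: field_simps)
    ultimately have "m2 \<in> R2 m1" unfolding R2_def
      by (simp add: le_floor_iff ceiling_le_iff del: of_int_add) linarith
    with m1 m show "m \<in> Sigma R1 R2" by simp
  qed
  have fin: "finite (Sigma R1 R2)" unfolding R1_def R2_def by simp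
  thus "finite (box_set \<delta> ((\<lambda>t. (t, f t)) ` {a..b}))" using sub finite_subset by blast
  have "card (box_set \<delta> ((\<lambda>t. (t, f t)) ` {a..b})) \<le> card (Sigma R1 R2)"
    by (rule card_mono[OF fin sub])
  also have "card (Sigma R1 R2) = (\<Sum>m1\<in>R1. card (R2 m1))"
    unfolding R1_def R2_def by (rule card_SigmaI) auto
  finally have "real (card (box_set \<delta> ((\<lambda>t. (t, f t)) ` {a..b}))) \<le> (\<Sum>m1\<in>R1. real (card (R2 m1)))"
    by (metis of_nat_le_iff of_nat_sum)
  also have "\<dots> \<le> (\<Sum>m1\<in>R1. 2 * h / \<delta> + 2)"
  proof (rule sum_mono)
    fix m1 assume "m1 \<in> R1"
    have "real (card (R2 m1)) \<le> (f (of_int m1 * \<delta>) + h)/\<delta> - ((f (of_int m1 * \<delta>) - h)/\<delta>) + 2"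
      unfolding R2_def using h0 d0 by (intro int_card_upper2) (simp add: field_simps)
    also have "\<dots> = 2 * h / \<delta> + 2" using d0 by (simp add: field_simps)
    finally show "real (card (R2 m1)) \<le> 2 * h / \<delta> + 2" .
  qed
  also have "\<dots> = real (card R1) * (2 * h / \<delta> + 2)" by simp
  also have "\<dots> \<le> ((b - a) / \<delta> + 2) * (2 * h / \<delta> + 2)"
  proof (rule mult_right_mono)
    have "real (card R1) \<le> b/\<delta> - (a/\<delta>) + 2"
      unfolding R1_def using ab d0 by (intro int_card_upper2) (simp add: field_simps)
    thus "real (card R1) \<le> (b - a) / \<delta> + 2" by (simp add: diff_divide_distrib)
    show "0 \<le> 2 * h / \<delta> + 2" using h0 d0 by simp
  qed
  finally show "real (card (box_set \<delta> ((\<lambda>t. (t, f t)) ` {a..b}))) \<le> ((b - a) / \<delta> + 2) * (2 * h / \<delta> + 2)" .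
qed


lemma integral_cols:
  fixes g :: "real \<Rightarrow> complex"
  assumes g: "continuous_on UNIV g" and d: "0 \<le> \<delta>"
  shows "integral {c..c + real K * \<delta>} g = (\<Sum>i<K. integral {c + real i * \<delta>..c + real i * \<delta> + \<delta>} g)"
proof (induction K)
  case 0
  then show ?case by simp
next
  case (Suc K)
  have "integral {c..c + real K * \<delta>} g + integral {c + real K * \<delta>..c + real (Suc K) * \<delta>} g
        = integral {c..c + real (Suc K) * \<delta>} g"
    by (intro Henstock_Kurzweil_Integration.integral_combine integrable_continuous_interval continuous_on_subset[OF g])
       (use d in \<open>auto simp: algebra_simps\<close>)
  moreover have "c + real (Suc K) * \<delta> = c + real K * \<delta> + \<delta>" by (simp add: algebra_simps)
  ultimately show ?case using Suc by (simp add: algebra_simps)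
qed

lemma column_bound:
  fixes f :: "real \<Rightarrow> real"
  assumes d0: "0 < \<delta>" and cont: "continuous_on UNIV f" and w: "\<omega> * \<delta> = 2 * pi"
    and lo: "\<And>t. t \<in> {c..c+\<delta>} \<Longrightarrow> l \<le> f t" and hi: "\<And>t. t \<in> {c..c+\<delta>} \<Longrightarrow> f t \<le> h"
  shows "norm (integral {c..c+\<delta>} (\<lambda>t. complex_of_real (f t) * cis (\<omega> * t))) \<le> \<delta> * (h - l)"
proof -
  let ?A = "\<lambda>t. complex_of_real (f t - f c) * cis (\<omega> * t)"
  let ?B = "\<lambda>t. complex_of_real (f c) * cis (\<omega> * t)"
  have cA: "continuous_on UNIV ?A" by (intro continuous_intros cont)
  have iA: "(?A has_integral integral {c..c+\<delta>} ?A) {c..c+\<delta>}"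
    by (intro integrable_integral integrable_continuous_interval continuous_on_subset[OF cA]) auto
  have ccis: "continuous_on UNIV (\<lambda>t. cis (\<omega> * t))" by (intro continuous_intros)
  have "(\<lambda>t. cis (\<omega> * t)) integrable_on {c..c+\<delta>}"
    by (intro integrable_continuous_interval continuous_on_subset[OF ccis]) auto
  hence iC: "((\<lambda>t. cis (\<omega> * t)) has_integral 0) {c..c+\<delta>}"
    using cis_integral_period[OF d0 w, of c] has_integral_integral by metis
  have iB: "(?B has_integral 0) {c..c+\<delta>}"
    using has_integral_mult_right[OF iC, of "complex_of_real (f c)"] by simp
  have "((\<lambda>t. ?A t + ?B t) has_integral (integral {c..c+\<delta>} ?A + 0)) {c..c+\<delta>}"
    by (rule has_integral_add[OF iA iB])
  moreover have "(\<lambda>t. ?A t + ?B t) = (\<lambda>t. complex_of_real (f t) * cis (\<omega> * t))"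
    by (auto simp: algebra_simps of_real_diff)
  ultimately have eq: "integral {c..c+\<delta>} (\<lambda>t. complex_of_real (f t) * cis (\<omega> * t)) = integral {c..c+\<delta>} ?A"
    by (simp add: integral_unique)
  have "norm (integral {c..c+\<delta>} ?A) \<le> (h - l) * Henstock_Kurzweil_Integration.content {c..c+\<delta>}"
  proof (rule has_integral_bound_real[OF _ _ iA, of _ "{}"])
    show "0 \<le> h - l" using lo[of c] hi[of c] d0 by simp
    fix t assume t: "t \<in> {c..c+\<delta>} - {}"
    have "norm (?A t) = \<bar>f t - f c\<bar>" by (simp add: norm_mult del: of_real_diff)
    also have "\<dots> \<le> h - l" using lo[of c] hi[of c] lo[of t] hi[of t] t d0 by auto
    finally show "norm (?A t) \<le> h - l" .
  qed auto
  thus ?thesis using eq d0 by (simp add: mult.commute)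
qed

lemma box_lower:
  fixes f :: "real \<Rightarrow> real"
  assumes d0: "0 < \<delta>" and cont: "continuous_on UNIV f" and ac: "a \<le> c" and cb: "c + real K * \<delta> \<le> b"
    and cj: "c = of_int j0 * \<delta>" and w: "\<omega> * \<delta> = 2 * pi"
    and fin: "finite (box_set \<delta> ((\<lambda>t. (t, f t)) ` {a..b}))"
  shows "norm (integral {c..c + real K * \<delta>} (\<lambda>t. complex_of_real (f t) * cis (\<omega> * t))) / \<delta>^2 - real K
         \<le> real (card (box_set \<delta> ((\<lambda>t. (t, f t)) ` {a..b})))"
proof -
  define I where "I = (\<lambda>i::nat. {c + real i * \<delta>..c + real i * \<delta> + \<delta>})"
  have ex: "\<forall>i. \<exists>p. fst p \<in> I i \<and> snd p \<in> I i \<and> (\<forall>t\<in>I i. f (fst p) \<le> f t \<and> f t \<le> f (snd p))"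
  proof
    fix i
    have ne: "I i \<noteq> {}" unfolding I_def using d0 by auto
    have cpt: "compact (I i)" unfolding I_def by simp
    have ci: "continuous_on (I i) f" by (rule continuous_on_subset[OF cont]) auto
    obtain x1 where "x1 \<in> I i" "\<forall>y\<in>I i. f x1 \<le> f y" using continuous_attains_inf[OF cpt ne ci] by blast
    moreover obtain x2 where "x2 \<in> I i" "\<forall>y\<in>I i. f y \<le> f x2" using continuous_attains_sup[OF cpt ne ci] by blast
    ultimately show "\<exists>p. fst p \<in> I i \<and> snd p \<in> I i \<and> (\<forall>t\<in>I i. f (fst p) \<le> f t \<and> f t \<le> f (snd p))"
      by (intro exI[of _ "(x1, x2)"]) auto
  qed
  from choice[OF ex] obtain p where p: "\<And>i. fst (p i) \<in> I i \<and> snd (p i) \<in> I i \<and> (\<forall>t\<in>I i. f (fst (p i)) \<le> f t \<and> f t \<le> f (snd (p i)))"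
    by blast
  define u where "u = (\<lambda>i. fst (p i))"
  define v where "v = (\<lambda>i. snd (p i))"
  have uI: "u i \<in> I i" and vI: "v i \<in> I i" and uv: "\<And>t. t \<in> I i \<Longrightarrow> f (u i) \<le> f t \<and> f t \<le> f (v i)" for i
    using p unfolding u_def v_def by auto
  let ?F = "\<lambda>t. complex_of_real (f t) * cis (\<omega> * t)"
  have cF: "continuous_on UNIV ?F" by (intro continuous_intros cont)
  have "norm (integral {c..c + real K * \<delta>} ?F) = norm (\<Sum>i<K. integral (I i) ?F)"
    unfolding I_def using integral_cols[OF cF, of \<delta> c K] d0 by simp
  also have "\<dots> \<le> (\<Sum>i<K. norm (integral (I i) ?F))" by (rule norm_sum)
  also have "\<dots> \<le> (\<Sum>i<K. \<delta> * (f (v i) - f (u i)))"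
  proof (rule sum_mono)
    fix i assume "i \<in> {..<K}"
    show "norm (integral (I i) ?F) \<le> \<delta> * (f (v i) - f (u i))"
      unfolding I_def by (rule column_bound[OF d0 cont w]) (use uv[of _ i] in \<open>auto simp: I_def\<close>)
  qed
  finally have intb: "norm (integral {c..c + real K * \<delta>} ?F) \<le> \<delta> * (\<Sum>i<K. f (v i) - f (u i))"
    by (simp add: sum_distrib_left)
  define S' where "S' = (SIGMA i:{..<K}. {\<lceil>f (u i) / \<delta>\<rceil>..\<lfloor>f (v i) / \<delta>\<rfloor>})"
  define \<phi> where "\<phi> = (\<lambda>(i::nat, m2::int). (j0 + int i, m2))"
  have inj: "inj_on \<phi> S'" unfolding \<phi>_def inj_on_def by auto
  have sub: "\<phi> ` S' \<subseteq> box_set \<delta> ((\<lambda>t. (t, f t)) ` {a..b})"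
  proof
    fix m assume "m \<in> \<phi> ` S'"
    then obtain i m2 where i: "i < K" and m2: "\<lceil>f (u i) / \<delta>\<rceil> \<le> m2" "m2 \<le> \<lfloor>f (v i) / \<delta>\<rfloor>"
      and m: "m = (j0 + int i, m2)"
      unfolding S'_def \<phi>_def by auto
    have y1: "f (u i) \<le> of_int m2 * \<delta>" using m2 d0 by (simp add: ceiling_le_iff field_simps)
    have y2: "of_int m2 * \<delta> \<le> f (v i)" using m2 d0 by (simp add: le_floor_iff field_simps)
    have cI: "\<And>x y. continuous_on {x..y} f" by (rule continuous_on_subset[OF cont]) auto
    have "\<exists>t. t \<in> I i \<and> f t = of_int m2 * \<delta>"
    proof (cases "u i \<le> v i")
      case True
      then obtain t where "u i \<le> t" "t \<le> v i" "f t = of_int m2 * \<delta>"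
        using IVT'[OF y1 y2 True cI] by blast
      moreover have "t \<in> I i" using calculation uI[of i] vI[of i] unfolding I_def by auto
      ultimately show ?thesis by blast
    next
      case False
      then obtain t where "v i \<le> t" "t \<le> u i" "f t = of_int m2 * \<delta>"
        using IVT2'[OF y1 y2 _ cI] False by force
      moreover have "t \<in> I i" using calculation uI[of i] vI[of i] unfolding I_def by auto
      ultimately show ?thesis by blast
    qed
    then obtain t where t: "t \<in> I i" "f t = of_int m2 * \<delta>" by blast
    have "real i * \<delta> + \<delta> \<le> real K * \<delta>"
    proof -
      have "real i + 1 \<le> real K" using i by simp
      hence "(real i + 1) * \<delta> \<le> real K * \<delta>" using d0 by (intro mult_right_mono) auto
      thus ?thesis by (simp add: algebra_simps)
    qed
    moreover have "0 \<le> real i * \<delta>" using d0 by simp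
    moreover have "c + real i * \<delta> \<le> t" "t \<le> c + real i * \<delta> + \<delta>" using t(1) unfolding I_def by auto
    ultimately have tab: "t \<in> {a..b}" using ac cb unfolding atLeastAtMost_iff by linarith
    have "of_int (j0 + int i) * \<delta> = c + real i * \<delta>" using cj by (simp add: algebra_simps)
    moreover have "(of_int (j0 + int i) + 1) * \<delta> = c + real i * \<delta> + \<delta>" using cj by (simp add: algebra_simps)
    ultimately show "m \<in> box_set \<delta> ((\<lambda>t. (t, f t)) ` {a..b})"
      unfolding m mem_box_graph using t tab d0 unfolding I_def by (intro bexI[of _ t]) (auto simp: algebra_simps)
  qed
  have "card S' = (\<Sum>i<K. card {\<lceil>f (u i) / \<delta>\<rceil>..\<lfloor>f (v i) / \<delta>\<rfloor>})"
    unfolding S'_def by (rule card_SigmaI) auto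
  hence "real (card S') = (\<Sum>i<K. real (card {\<lceil>f (u i) / \<delta>\<rceil>..\<lfloor>f (v i) / \<delta>\<rfloor>}))" by simp
  also have "\<dots> \<ge> (\<Sum>i<K. f (v i) / \<delta> - f (u i) / \<delta> - 1)"
    by (intro sum_mono int_card_lower)
  finally have cS: "(\<Sum>i<K. f (v i) / \<delta> - f (u i) / \<delta> - 1) \<le> real (card S')" .
  have "card S' = card (\<phi> ` S')" using card_image[OF inj] by simp
  also have "\<dots> \<le> card (box_set \<delta> ((\<lambda>t. (t, f t)) ` {a..b}))" by (rule card_mono[OF fin sub])
  finally have cS2: "real (card S') \<le> real (card (box_set \<delta> ((\<lambda>t. (t, f t)) ` {a..b})))" by simp
  have "(\<Sum>i<K. f (v i) / \<delta> - f (u i) / \<delta> - 1) = (\<Sum>i<K. f (v i) - f (u i)) / \<delta> - real K"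
    by (simp add: sum_subtractf sum_divide_distrib[symmetric] diff_divide_distrib)
  moreover have "norm (integral {c..c + real K * \<delta>} ?F) / \<delta>^2 \<le> (\<Sum>i<K. f (v i) - f (u i)) / \<delta>"
    using intb d0 by (simp add: power2_eq_square field_simps)
  ultimately show ?thesis using cS cS2 by linarith
qed


lemma box_compare:
  assumes d0: "0 < \<delta>" and dd: "\<delta> \<le> \<delta>'" and fin: "finite (box_set \<delta> A)"
  shows "card (box_set \<delta>' A) \<le> 9 * card (box_set \<delta> A)"
proof -
  have d1: "0 < \<delta>'" using d0 dd by simp
  define N1 where "N1 = (\<lambda>i::int. {\<lceil>of_int i * \<delta> / \<delta>'\<rceil> - 1..\<lfloor>(of_int i + 1) * \<delta> / \<delta>'\<rfloor>})"
  define Nb where "Nb = (\<lambda>Q::int\<times>int. N1 (fst Q) \<times> N1 (snd Q))"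
  have cN1: "card (N1 i) \<le> 3" for i
  proof -
    have "real (card (N1 i)) \<le> (of_int i + 1) * \<delta> / \<delta>' - of_int i * \<delta> / \<delta>' + 2"
      unfolding N1_def using d0 d1 by (intro int_card_upper2) (simp add: field_simps)
    also have "\<dots> = \<delta> / \<delta>' + 2" using d1 by (simp add: field_simps)
    also have "\<dots> \<le> 3" using dd d1 by simp
    finally show ?thesis by simp
  qed
  have cNb: "card (Nb Q) \<le> 9" for Q
  proof -
    have "card (Nb Q) = card (N1 (fst Q)) * card (N1 (snd Q))" unfolding Nb_def by (simp add: card_cartesian_product)
    also have "\<dots> \<le> 3 * 3" using cN1 by (intro mult_le_mono) auto
    finally show ?thesis by simp
  qed
  have memN1: "m \<in> N1 i" if "of_int m * \<delta>' \<le> u" "u \<le> (of_int m + 1) * \<delta>'"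
     "of_int i * \<delta> \<le> u" "u \<le> (of_int i + 1) * \<delta>" for m i u
  proof -
    have "of_int i * \<delta> / \<delta>' \<le> of_int (m + 1)" using that d1 by (simp add: field_simps)
    moreover have "of_int m \<le> (of_int i + 1) * \<delta> / \<delta>'" using that d1 by (simp add: field_simps)
    ultimately show ?thesis unfolding N1_def by (simp add: le_floor_iff ceiling_le_iff del: of_int_add) linarith
  qed
  have sub: "box_set \<delta>' A \<subseteq> (\<Union>Q\<in>box_set \<delta> A. Nb Q)"
  proof
    fix M assume "M \<in> box_set \<delta>' A"
    then obtain u v where uv: "(u, v) \<in> A" "of_int (fst M) * \<delta>' \<le> u" "u \<le> (of_int (fst M) + 1) * \<delta>'"
       "of_int (snd M) * \<delta>' \<le> v" "v \<le> (of_int (snd M) + 1) * \<delta>'"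
      unfolding box_set_def by auto
    define Q where "Q = (\<lfloor>u / \<delta>\<rfloor>, \<lfloor>v / \<delta>\<rfloor>)"
    have fl: "of_int \<lfloor>y / \<delta>\<rfloor> * \<delta> \<le> y" "y \<le> (of_int \<lfloor>y / \<delta>\<rfloor> + 1) * \<delta>" for y
    proof -
      have "of_int \<lfloor>y / \<delta>\<rfloor> \<le> y / \<delta>" by simp
      thus "of_int \<lfloor>y / \<delta>\<rfloor> * \<delta> \<le> y" using d0 by (simp only: pos_le_divide_eq)
      have "y / \<delta> \<le> of_int \<lfloor>y / \<delta>\<rfloor> + 1" by linarith
      thus "y \<le> (of_int \<lfloor>y / \<delta>\<rfloor> + 1) * \<delta>" using d0 by (simp only: pos_divide_le_eq)
    qed
    have "Q \<in> box_set \<delta> A" unfolding box_set_def Q_def using uv(1) fl[of u] fl[of v] by force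
    moreover have "M \<in> Nb Q" unfolding Nb_def Q_def
      using memN1[OF uv(2,3) fl[of u]] memN1[OF uv(4,5) fl[of v]] by (cases M) auto
    ultimately show "M \<in> (\<Union>Q\<in>box_set \<delta> A. Nb Q)" by blast
  qed
  have finU: "finite (\<Union>Q\<in>box_set \<delta> A. Nb Q)" using fin unfolding Nb_def N1_def by simp
  have "card (box_set \<delta>' A) \<le> card (\<Union>Q\<in>box_set \<delta> A. Nb Q)" by (rule card_mono[OF finU sub])
  also have "\<dots> \<le> (\<Sum>Q\<in>box_set \<delta> A. card (Nb Q))" by (rule card_UN_le[OF fin])
  also have "\<dots> \<le> (\<Sum>Q\<in>box_set \<delta> A. 9)" by (intro sum_mono cNb)
  finally show ?thesis by simp
qed


definition PsiM :: "nat \<Rightarrow> real \<Rightarrow> real \<Rightarrow> nat \<Rightarrow> real \<Rightarrow> complex" where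
  "PsiM q s x M t = complex_of_real (NormConst q s) * (\<Sum>n<M. complex_of_real (cf q s x n) * ef q n t)"

lemma norm_ef2 [simp]: "norm (ef q n t) = 1" unfolding ef_def by simp

context
  fixes q :: nat and s :: real
  assumes q2: "2 \<le> q" and s0: "0 < s" and s2: "s < 2"
begin

lemmas cf_bound' = cf_bound[OF q2 s0 s2]
lemmas r_pos' = r_pos[OF q2 s0 s2]
lemmas r_lt1' = r_lt1[OF q2 s0 s2]
lemmas sum_cf_le' = sum_cf_le[OF q2 s0 s2]
lemmas N_nonneg' = N_nonneg[OF q2 s0 s2]
lemmas summable_terms' = summable_terms[OF q2 s0 s2]
lemmas summable_r' = summable_r[OF q2 s0 s2]
lemmas sums_r' = sums_r[OF q2 s0 s2]
lemmas Psi_eq' = Psi_eq[OF q2 s0 s2]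
lemmas norm_Psi' = norm_Psi[OF q2 s0 s2]
lemmas BB_nonneg' = BB_nonneg[OF q2 s0 s2]
lemmas BB_def' = BB_def[OF q2 s0 s2]
lemmas AA_def' = AA_def[OF q2 s0 s2]
lemmas AA_pos' = AA_pos[OF q2 s0 s2]
lemmas AA_ge1' = AA_ge1[OF q2 s0 s2]
lemmas N_pos' = N_pos[OF q2 s0 s2]

lemma norm_PsiM: "norm (PsiM q s x M t) \<le> BB q s"
proof -
  have "norm (\<Sum>n<M. complex_of_real (cf q s x n) * ef q n t) \<le> (\<Sum>n<M. \<bar>cf q s x n\<bar>)"
    by (rule order.trans[OF norm_sum]) (simp add: norm_mult)
  also have "\<dots> \<le> AA q s" by (rule sum_cf_le') simp
  finally show ?thesis unfolding PsiM_def BB_def' norm_mult using N_nonneg'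
    by (auto intro: mult_left_mono)
qed

lemma Psi_tail: "norm (Psi q s x t - PsiM q s x M t) \<le> NormConst q s * ((rq q s) ^ M * AA q s)"
proof -
  let ?f = "\<lambda>n. complex_of_real (cf q s x n) * ef q n t"
  have split: "(\<Sum>n. ?f n) = (\<Sum>n. ?f (n + M)) + (\<Sum>i<M. ?f i)"
    by (rule suminf_split_initial_segment[OF summable_terms'])
  have diff: "Psi q s x t - PsiM q s x M t = complex_of_real (NormConst q s) * (\<Sum>n. ?f (n + M))"
    unfolding Psi_eq' PsiM_def split by (simp add: algebra_simps)
  have bnd: "norm (?f (n + M)) \<le> (rq q s) ^ M * (rq q s) ^ n" for n
    using cf_bound'[of x "n+M"] by (simp add: norm_mult power_add mult.commute)
  have sg: "summable (\<lambda>n. (rq q s) ^ M * (rq q s) ^ n)" by (intro summable_mult summable_r')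
  have sn: "summable (\<lambda>n. norm (?f (n + M)))"
    by (rule summable_comparison_test[OF _ sg]) (use bnd in auto)
  have "norm (\<Sum>n. ?f (n + M)) \<le> (\<Sum>n. norm (?f (n + M)))" by (rule summable_norm[OF sn])
  also have "\<dots> \<le> (\<Sum>n. (rq q s) ^ M * (rq q s) ^ n)" by (rule suminf_le[OF bnd sn sg])
  also have "\<dots> = (rq q s) ^ M * AA q s" by (simp add: suminf_mult[OF summable_r'] sums_unique[OF sums_r', symmetric])
  finally show ?thesis unfolding diff norm_mult using N_nonneg' by (auto intro: mult_left_mono)
qed

lemma P_PM: "\<bar>Pdens q s x t - (norm (PsiM q s x M t))^2\<bar> \<le> 2 * BB q s * (NormConst q s * ((rq q s) ^ M * AA q s))"
proof -
  let ?a = "Psi q s x t" and ?b = "PsiM q s x M t"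
  have "\<bar>Pdens q s x t - (norm ?b)^2\<bar> = \<bar>(norm ?a + norm ?b) * (norm ?a - norm ?b)\<bar>"
    unfolding Pdens_def by (simp add: power2_eq_square algebra_simps)
  also have "\<dots> = (norm ?a + norm ?b) * \<bar>norm ?a - norm ?b\<bar>" by (simp add: abs_mult)
  also have "\<dots> \<le> (2 * BB q s) * norm (?a - ?b)"
    using norm_Psi'[of x t] norm_PsiM[of x M t] norm_triangle_ineq3[of ?a ?b] BB_nonneg'
    by (intro mult_mono) auto
  also have "\<dots> \<le> (2 * BB q s) * (NormConst q s * ((rq q s) ^ M * AA q s))"
    using Psi_tail BB_nonneg' by (intro mult_left_mono) auto
  finally show ?thesis .
qed

lemma PM_expand:
  "complex_of_real ((norm (PsiM q s x M t))^2) * cis (\<omega> * t) =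
   complex_of_real ((NormConst q s)^2) * (\<Sum>m<M. \<Sum>m'<M. complex_of_real (cf q s x m * cf q s x m') *
      cis ((\<omega> - real q ^ (2*m) + real q ^ (2*m')) * t))"
proof -
  let ?N = "complex_of_real (NormConst q s)"
  have "complex_of_real ((norm (PsiM q s x M t))^2) = PsiM q s x M t * cnj (PsiM q s x M t)"
    by (rule complex_norm_square)
  also have "\<dots> = ?N * ?N * ((\<Sum>m<M. complex_of_real (cf q s x m) * ef q m t) *
                 (\<Sum>m'<M. complex_of_real (cf q s x m') * cnj (ef q m' t)))"
    unfolding PsiM_def by (simp add: algebra_simps)
  also have "\<dots> = ?N * ?N * (\<Sum>m<M. \<Sum>m'<M. complex_of_real (cf q s x m) * ef q m t *
                 (complex_of_real (cf q s x m') * cnj (ef q m' t)))"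
    by (simp add: sum_product)
  finally have e1: "complex_of_real ((norm (PsiM q s x M t))^2) = \<dots>" .
  have e2: "ef q m t * cnj (ef q m' t) * cis (\<omega> * t) = cis ((\<omega> - real q ^ (2*m) + real q ^ (2*m')) * t)" for m m'
    unfolding ef_def cis_cnj by (simp add: cis_mult algebra_simps)
  have trm: "?N * ?N * (complex_of_real (cf q s x m) * ef q m t * (complex_of_real (cf q s x m') * cnj (ef q m' t))) * cis (\<omega> * t)
     = complex_of_real ((NormConst q s)^2) * (complex_of_real (cf q s x m * cf q s x m') *
      cis ((\<omega> - real q ^ (2*m) + real q ^ (2*m')) * t))" for m m'
  proof -
    have "?N * ?N * (complex_of_real (cf q s x m) * ef q m t * (complex_of_real (cf q s x m') * cnj (ef q m' t))) * cis (\<omega> * t)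
      = complex_of_real ((NormConst q s)^2) * complex_of_real (cf q s x m * cf q s x m') * (ef q m t * cnj (ef q m' t) * cis (\<omega> * t))"
      by (simp add: power2_eq_square algebra_simps)
    thus ?thesis unfolding e2 by simp
  qed
  have L: "?N * ?N * (\<Sum>m<M. \<Sum>m'<M. complex_of_real (cf q s x m) * ef q m t *
                 (complex_of_real (cf q s x m') * cnj (ef q m' t))) * cis (\<omega> * t)
     = (\<Sum>m<M. \<Sum>m'<M. ?N * ?N * (complex_of_real (cf q s x m) * ef q m t *
                 (complex_of_real (cf q s x m') * cnj (ef q m' t))) * cis (\<omega> * t))"
    by (simp add: sum_distrib_left sum_distrib_right)
  have R: "complex_of_real ((NormConst q s)^2) * (\<Sum>m<M. \<Sum>m'<M. complex_of_real (cf q s x m * cf q s x m') *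
      cis ((\<omega> - real q ^ (2*m) + real q ^ (2*m')) * t)) =
      (\<Sum>m<M. \<Sum>m'<M. complex_of_real ((NormConst q s)^2) * (complex_of_real (cf q s x m * cf q s x m') *
      cis ((\<omega> - real q ^ (2*m) + real q ^ (2*m')) * t)))"
    by (simp add: sum_distrib_left)
  show ?thesis unfolding e1 L R using trm by (intro sum.cong refl)
qed

lemma PM_integral:
  "integral {\<alpha>..\<beta>} (\<lambda>t. complex_of_real ((norm (PsiM q s x M t))^2) * cis (\<omega> * t)) =
   complex_of_real ((NormConst q s)^2) * (\<Sum>m<M. \<Sum>m'<M. complex_of_real (cf q s x m * cf q s x m') *
      integral {\<alpha>..\<beta>} (\<lambda>t. cis ((\<omega> - real q ^ (2*m) + real q ^ (2*m')) * t)))"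
proof -
  have int: "(\<lambda>t. cis (c * t)) integrable_on {\<alpha>..\<beta>}" for c
    by (intro integrable_continuous_interval continuous_intros)
  have int2: "(\<lambda>t. z * cis (c * t)) integrable_on {\<alpha>..\<beta>}" for c z
    by (intro integrable_continuous_interval continuous_intros)
  have int3: "(\<lambda>t. \<Sum>m'<M. z m' * cis (c m' * t)) integrable_on {\<alpha>..\<beta>}" for c z
    by (intro integrable_continuous_interval continuous_intros)
  show ?thesis unfolding PM_expand
    apply (subst integral_mult_right)
    apply (subst integral_sum, simp, rule int3)
    apply (subst integral_sum, simp, rule int2)
    apply (subst integral_mult_right)
    apply simp
    done
qed

end


context
  fixes q :: nat and s :: real
  assumes q2: "2 \<le> q" and s0: "0 < s" and s2: "s < 2"
begin

lemmas cf_bound'' = cf_bound[OF q2 s0 s2]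
lemmas sum_cf_le'' = sum_cf_le[OF q2 s0 s2]
lemmas AA_pos'' = AA_pos[OF q2 s0 s2]

lemma W_pos: "0 < real q ^ (2*m)" using q2 by simp

lemma W_grow: assumes "a < b" shows "4 * real q ^ (2*a) \<le> real q ^ (2*b)"
proof -
  have e: "2*b = 2*a + 2*(b-a)" using assms by simp
  have "real q ^ (2*b) = real q ^ (2*a) * real q ^ (2*(b-a))"
    by (metis e power_add)
  moreover have "4 \<le> real q ^ (2*(b-a))"
  proof -
    have "(4::real) = 2 ^ 2" by simp
    also have "\<dots> \<le> real q ^ 2" using q2 by (intro power_mono) auto
    also have "\<dots> \<le> real q ^ (2*(b-a))" using q2 assms by (intro power_increasing) auto
    finally show ?thesis .
  qed
  ultimately show ?thesis using W_pos[of a] by (simp add: mult.commute mult_left_mono)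
qed

lemma W_mono: assumes "a \<le> b" shows "real q ^ (2*a) \<le> real q ^ (2*b)"
  using q2 assms by (intro power_increasing) auto

lemma B1: assumes "m' \<noteq> k" shows "real q ^ (2*k) / 2 \<le> \<bar>real q ^ (2*m') - real q ^ (2*k)\<bar>"
proof (cases "m' < k")
  case True
  then show ?thesis using W_grow[OF True] W_pos[of m'] abs_ge_minus_self[of "real q ^ (2*m') - real q ^ (2*k)"] by linarith
next
  case False
  hence "k < m'" using assms by simp
  then show ?thesis using W_grow[of k m'] W_pos[of k] abs_ge_self[of "real q ^ (2*m') - real q ^ (2*k)"] by linarith
qed

lemma B2: assumes "m \<noteq> n" "k < n"
  shows "real q ^ (2*n) / 2 \<le> \<bar>real q ^ (2*n) - real q ^ (2*k) - real q ^ (2*m) + real q ^ (2*m')\<bar>"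
proof -
  note Wk = W_grow[OF assms(2)]
  show ?thesis
  proof (cases "m < n")
    case True
    then show ?thesis using W_grow[OF True] Wk W_pos[of m']
      abs_ge_self[of "real q ^ (2*n) - real q ^ (2*k) - real q ^ (2*m) + real q ^ (2*m')"] by linarith
  next
    case False
    hence mn: "n < m" using assms by simp
    show ?thesis
    proof (cases "m \<le> m'")
      case True
      then show ?thesis using W_mono[OF True] Wk W_pos[of k]
        abs_ge_self[of "real q ^ (2*n) - real q ^ (2*k) - real q ^ (2*m) + real q ^ (2*m')"] by linarith
    next
      case False
      hence "m' < m" by simp
      then show ?thesis using W_grow[OF \<open>m' < m\<close>] W_grow[OF mn] W_pos[of k] W_pos[of n]
        abs_ge_minus_self[of "real q ^ (2*n) - real q ^ (2*k) - real q ^ (2*m) + real q ^ (2*m')"] by linarith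
    qed
  qed
qed

lemma main_sum_bound:
  assumes kn: "k < n" and nM: "n < M" and ab: "\<alpha> \<le> \<beta>"
  shows "\<bar>cf q s x n\<bar> * \<bar>cf q s x k\<bar> * (\<beta> - \<alpha>) - 4 * AA q s * \<bar>cf q s x n\<bar> / real q ^ (2*k)
           - 4 * (AA q s)^2 / real q ^ (2*n)
         \<le> norm (\<Sum>m<M. \<Sum>m'<M. complex_of_real (cf q s x m * cf q s x m') *
              integral {\<alpha>..\<beta>} (\<lambda>t. cis ((real q ^ (2*n) - real q ^ (2*k) - real q ^ (2*m) + real q ^ (2*m')) * t)))"
proof -
  define W where "W = (\<lambda>m::nat. real q ^ (2*m))"
  define c where "c = cf q s x"
  define E where "E = (\<lambda>\<xi>. integral {\<alpha>..\<beta>} (\<lambda>t. cis (\<xi> * t)))"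
  define X where "X = (\<lambda>m m'. complex_of_real (c m * c m') * E (W n - W k - W m + W m'))"
  have kM: "k < M" using kn nM by simp
  have Wp: "\<And>m. 0 < W m" unfolding W_def using W_pos by simp
  have Eb: "norm (E \<xi>) \<le> 2 / \<bar>\<xi>\<bar>" if "\<xi> \<noteq> 0" for \<xi>
    unfolding E_def by (rule cis_integral_bound[OF ab that])
  have Eb2: "norm (E \<xi>) \<le> 4 / B" if "B / 2 \<le> \<bar>\<xi>\<bar>" "0 < B" for \<xi> B
  proof -
    have "\<xi> \<noteq> 0" using that by auto
    hence "norm (E \<xi>) \<le> 2 / \<bar>\<xi>\<bar>" by (rule Eb)
    also have "\<dots> \<le> 2 / (B / 2)" using that by (intro divide_left_mono) auto
    finally show ?thesis by simp
  qed
  have Xnk: "X n k = complex_of_real (c n * c k * (\<beta> - \<alpha>))"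
  proof -
    have "W n - W k - W n + W k = 0" by simp
    hence "E (W n - W k - W n + W k) = complex_of_real (\<beta> - \<alpha>)"
      unfolding E_def using cis_integral_zero[OF ab] by simp
    thus ?thesis unfolding X_def by simp
  qed
  have X1: "norm (X n m') \<le> \<bar>c n\<bar> * \<bar>c m'\<bar> * (4 / W k)" if "m' \<noteq> k" for m'
  proof -
    have "W k / 2 \<le> \<bar>W n - W k - W n + W m'\<bar>" using B1[OF that] unfolding W_def by simp
    hence "norm (E (W n - W k - W n + W m')) \<le> 4 / W k" using Wp by (intro Eb2) auto
    moreover have "norm (X n m') = \<bar>c n\<bar> * \<bar>c m'\<bar> * norm (E (W n - W k - W n + W m'))"
      unfolding X_def by (simp add: norm_mult abs_mult)
    ultimately show ?thesis using mult_left_mono[of "norm (E (W n - W k - W n + W m'))" "4 / W k" "\<bar>c n\<bar> * \<bar>c m'\<bar>"] by simp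
  qed
  have X2: "norm (X m m') \<le> \<bar>c m\<bar> * \<bar>c m'\<bar> * (4 / W n)" if "m \<noteq> n" for m m'
  proof -
    have "W n / 2 \<le> \<bar>W n - W k - W m + W m'\<bar>" using B2[OF that kn] unfolding W_def by simp
    hence "norm (E (W n - W k - W m + W m')) \<le> 4 / W n" using Wp by (intro Eb2) auto
    moreover have "norm (X m m') = \<bar>c m\<bar> * \<bar>c m'\<bar> * norm (E (W n - W k - W m + W m'))"
      unfolding X_def by (simp add: norm_mult abs_mult)
    ultimately show ?thesis using mult_left_mono[of "norm (E (W n - W k - W m + W m'))" "4 / W n" "\<bar>c m\<bar> * \<bar>c m'\<bar>"] by simp
  qed
  have sumc: "(\<Sum>m\<in>F. \<bar>c m\<bar>) \<le> AA q s" if "finite F" for F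
    unfolding c_def using sum_cf_le''[OF that] .
  have G: "(\<Sum>m<M. \<Sum>m'<M. X m m') = X n k + (\<Sum>m'\<in>{..<M}-{k}. X n m') + (\<Sum>m\<in>{..<M}-{n}. \<Sum>m'<M. X m m')"
    using sum.remove[of "{..<M}" n "\<lambda>m. \<Sum>m'<M. X m m'"] sum.remove[of "{..<M}" k "X n"] nM kM by simp
  have R1: "norm (\<Sum>m'\<in>{..<M}-{k}. X n m') \<le> 4 * AA q s * \<bar>c n\<bar> / W k"
  proof -
    have "norm (\<Sum>m'\<in>{..<M}-{k}. X n m') \<le> (\<Sum>m'\<in>{..<M}-{k}. \<bar>c n\<bar> * \<bar>c m'\<bar> * (4 / W k))"
      by (rule order.trans[OF norm_sum sum_mono]) (use X1 in auto)
    also have "\<dots> = \<bar>c n\<bar> * (4 / W k) * (\<Sum>m'\<in>{..<M}-{k}. \<bar>c m'\<bar>)"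
      by (simp only: sum_distrib_left mult.commute mult.left_commute mult.assoc)
    also have "\<dots> \<le> \<bar>c n\<bar> * (4 / W k) * AA q s"
      using sumc[of "{..<M}-{k}"] Wp[of k] by (intro mult_left_mono) auto
    finally show ?thesis by (simp add: mult.commute mult.left_commute)
  qed
  have R2: "norm (\<Sum>m\<in>{..<M}-{n}. \<Sum>m'<M. X m m') \<le> 4 * (AA q s)^2 / W n"
  proof -
    have "norm (\<Sum>m\<in>{..<M}-{n}. \<Sum>m'<M. X m m') \<le> (\<Sum>m\<in>{..<M}-{n}. \<Sum>m'<M. norm (X m m'))"
      by (rule order.trans[OF norm_sum sum_mono]) (rule norm_sum)
    also have "\<dots> \<le> (\<Sum>m\<in>{..<M}-{n}. \<Sum>m'<M. \<bar>c m\<bar> * \<bar>c m'\<bar> * (4 / W n))"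
      by (intro sum_mono X2) auto
    also have "\<dots> = (4 / W n) * ((\<Sum>m\<in>{..<M}-{n}. \<bar>c m\<bar>) * (\<Sum>m'<M. \<bar>c m'\<bar>))"
      by (simp only: sum_product sum_distrib_left mult_ac)
    also have "\<dots> = (4 / W n) * (\<Sum>m\<in>{..<M}-{n}. \<bar>c m\<bar>) * (\<Sum>m'<M. \<bar>c m'\<bar>)"
      by (simp only: mult_ac)
    also have "\<dots> \<le> (4 / W n) * AA q s * AA q s"
      using sumc[of "{..<M}-{n}"] sumc[of "{..<M}"] Wp[of n] AA_pos''
      by (intro mult_mono) (auto intro: sum_nonneg)
    finally show ?thesis by (simp add: power2_eq_square)
  qed
  have "norm (X n k) - norm (\<Sum>m'\<in>{..<M}-{k}. X n m') - norm (\<Sum>m\<in>{..<M}-{n}. \<Sum>m'<M. X m m')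
        \<le> norm (\<Sum>m<M. \<Sum>m'<M. X m m')"
    unfolding G by (smt (verit) norm_triangle_ineq4 norm_diff_ineq)
  moreover have "norm (X n k) = \<bar>c n\<bar> * \<bar>c k\<bar> * (\<beta> - \<alpha>)" using ab unfolding Xnk norm_of_real by (simp add: abs_mult)
  ultimately show ?thesis using R1 R2 unfolding X_def E_def W_def c_def by simp
qed

end


lemma pow_ev_large: fixes x :: real assumes "1 < x" shows "\<exists>N. \<forall>n\<ge>N. y \<le> x ^ n"
proof -
  obtain N where N: "y < x ^ N" using real_arch_pow[OF assms] by blast
  have "y \<le> x ^ n" if "n \<ge> N" for n
  proof -
    have "x ^ N \<le> x ^ n" by (rule power_increasing[OF that]) (use assms in simp)
    thus ?thesis using N by simp
  qed
  thus ?thesis by blast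
qed

lemma pow_ev_small: fixes x :: real assumes "0 \<le> x" "x < 1" "0 < y" shows "\<exists>N. \<forall>n\<ge>N. x ^ n \<le> y"
proof -
  obtain N where N: "x ^ N < y" using real_arch_pow_inv[OF assms(3,2)] by blast
  have "x ^ n \<le> y" if "n \<ge> N" for n
    using N power_decreasing[OF that, of x] assms by simp
  thus ?thesis by blast
qed

context
  fixes q :: nat and s :: real
  assumes q2: "2 \<le> q" and s0: "0 < s" and s2: "s < 2"
begin

lemma cont_P: "continuous_on UNIV (Pdens q s x)"
proof -
  define \<beta> where "\<beta> = (1 - s/2) / 2"
  have b0: "0 < \<beta>" and b1: "\<beta> < 1 - s/2" unfolding \<beta>_def using s2 by auto
  define C where "C = 2 * BB q s * (NormConst q s * 2 / (1 - rq q s * real q powr (2*\<beta>)))"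
  have H: "\<bar>Pdens q s x t - Pdens q s x t'\<bar> \<le> C * \<bar>t - t'\<bar> powr \<beta>" for t t'
    unfolding C_def by (rule holder_P[OF q2 s0 s2 b0 b1])
  show ?thesis unfolding continuous_on_def
  proof safe
    fix t0 :: real
    have "((\<lambda>t. C * \<bar>t - t0\<bar> powr \<beta>) \<longlongrightarrow> C * 0) (at t0 within UNIV)"
      by (intro tendsto_mult tendsto_const tendsto_zero_powrI[where b=\<beta>])
         (auto intro!: tendsto_eq_intros simp: b0)
    hence l: "((\<lambda>t. C * \<bar>t - t0\<bar> powr \<beta>) \<longlongrightarrow> 0) (at t0 within UNIV)" by simp
    have "((\<lambda>t. Pdens q s x t - Pdens q s x t0) \<longlongrightarrow> 0) (at t0 within UNIV)"
      by (rule Lim_null_comparison[OF _ l]) (use H in auto)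
    thus "(Pdens q s x \<longlongrightarrow> Pdens q s x t0) (at t0 within UNIV)" by (rule LIM_zero_cancel)
  qed
qed

lemma integral_lower:
  assumes kn: "k < n" and ab: "\<alpha> \<le> \<beta>"
    and cn: "lam ^ n \<le> \<bar>cf q s x n\<bar>"
    and ck: "\<kappa> \<le> \<bar>cf q s x k\<bar> * (\<beta> - \<alpha>) - 4 * AA q s / real q ^ (2*k)"
    and k0: "0 \<le> \<kappa>" and l0: "0 \<le> lam"
  shows "(NormConst q s)^2 * (\<kappa> * lam ^ n - 5 * (AA q s)^2 / real q ^ (2*n))
     \<le> norm (integral {\<alpha>..\<beta>} (\<lambda>t. complex_of_real (Pdens q s x t) * cis ((real q ^ (2*n) - real q ^ (2*k)) * t)))"
proof -
  define N where "N = NormConst q s"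
  define A where "A = AA q s"
  define \<omega> where "\<omega> = real q ^ (2*n) - real q ^ (2*k)"
  have Np: "0 < N" unfolding N_def by (rule N_pos[OF q2 s0 s2])
  have Ap: "0 < A" unfolding A_def by (rule AA_pos[OF q2 s0 s2])
  have Bp: "0 \<le> BB q s" by (rule BB_nonneg[OF q2 s0 s2])
  have Wn: "0 < real q ^ (2*n)" using W_pos[OF q2 s0 s2] .
  define tol where "tol = N^2 * A^2 / real q ^ (2*n)"
  have tolp: "0 < tol" unfolding tol_def using Np Ap Wn by simp
  have h0: "0 \<le> 2 * BB q s * N * A" using Bp Np Ap by (intro mult_nonneg_nonneg) auto
  have h1: "0 < 2 * BB q s * N * A + 1" using h0 by linarith
  have h2: "0 < \<beta> - \<alpha> + 1" using ab by linarith
  have pos: "0 < tol / ((\<beta> - \<alpha> + 1) * (2 * BB q s * N * A + 1))"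
    by (rule divide_pos_pos[OF tolp mult_pos_pos[OF h2 h1]])
  obtain M0 where M0: "\<forall>M\<ge>M0. (rq q s) ^ M \<le> tol / ((\<beta> - \<alpha> + 1) * (2 * BB q s * N * A + 1))"
    using pow_ev_small[OF _ r_lt1[OF q2 s0 s2] pos] r_pos[OF q2 s0 s2] by auto
  define M where "M = max M0 (n+1)"
  have nM: "n < M" unfolding M_def by simp
  have rM: "(rq q s) ^ M \<le> tol / ((\<beta> - \<alpha> + 1) * (2 * BB q s * N * A + 1))" using M0 unfolding M_def by simp
  define err where "err = 2 * BB q s * (N * ((rq q s) ^ M * A))"
  have errb: "(\<beta> - \<alpha>) * err \<le> tol"
  proof -
    have r0: "0 \<le> (rq q s) ^ M" using r_pos[OF q2 s0 s2] by simp
    have "(\<beta> - \<alpha>) * err = (\<beta> - \<alpha>) * (2 * BB q s * N * A) * (rq q s) ^ M" unfolding err_def by (simp add: algebra_simps)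
    also have "\<dots> \<le> (\<beta> - \<alpha> + 1) * (2 * BB q s * N * A + 1) * (rq q s) ^ M"
      using ab Bp Np Ap r0 by (intro mult_right_mono mult_mono) auto
    also have "\<dots> \<le> (\<beta> - \<alpha> + 1) * (2 * BB q s * N * A + 1) * (tol / ((\<beta> - \<alpha> + 1) * (2 * BB q s * N * A + 1)))"
      using rM ab Bp Np Ap by (intro mult_left_mono) auto
    also have "\<dots> = tol" using h1 h2 by simp
    finally show ?thesis .
  qed
  let ?F = "\<lambda>t. complex_of_real (Pdens q s x t) * cis (\<omega> * t)"
  let ?G = "\<lambda>t. complex_of_real ((norm (PsiM q s x M t))^2) * cis (\<omega> * t)"
  have cP: "continuous_on UNIV (Pdens q s x)" by (rule cont_P)
  have cPM: "continuous_on UNIV (\<lambda>t. PsiM q s x M t)"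
    unfolding PsiM_def ef_def by (intro continuous_intros)
  have cF: "continuous_on UNIV ?F" by (intro continuous_intros cP)
  have cG: "continuous_on UNIV ?G" by (intro continuous_intros cPM)
  have cD: "continuous_on UNIV (\<lambda>t. ?F t - ?G t)" by (intro continuous_intros cF cG)
  have iD: "((\<lambda>t. ?F t - ?G t) has_integral integral {\<alpha>..\<beta>} (\<lambda>t. ?F t - ?G t)) {\<alpha>..\<beta>}"
    by (rule integrable_integral[OF integrable_continuous_interval[OF continuous_on_subset[OF cD subset_UNIV]]])
  have iF: "?F integrable_on {\<alpha>..\<beta>}"
    by (rule integrable_continuous_interval[OF continuous_on_subset[OF cF subset_UNIV]])
  have iG: "?G integrable_on {\<alpha>..\<beta>}"
    by (rule integrable_continuous_interval[OF continuous_on_subset[OF cG subset_UNIV]])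
  have Dbound: "norm (integral {\<alpha>..\<beta>} (\<lambda>t. ?F t - ?G t)) \<le> err * Henstock_Kurzweil_Integration.content {\<alpha>..\<beta>}"
  proof (rule has_integral_bound_real[OF _ _ iD, of _ "{}"])
    show "0 \<le> err" unfolding err_def using Bp Np Ap r_pos[OF q2 s0 s2] by simp
    fix t assume "t \<in> {\<alpha>..\<beta>} - {}"
    have "?F t - ?G t = complex_of_real (Pdens q s x t - (norm (PsiM q s x M t))^2) * cis (\<omega> * t)"
      by (simp only: of_real_diff left_diff_distrib)
    hence "norm (?F t - ?G t) = \<bar>Pdens q s x t - (norm (PsiM q s x M t))^2\<bar>"
      by (simp only: norm_mult norm_cis norm_of_real mult_1_right)
    also have "\<dots> \<le> err" unfolding err_def N_def A_def by (rule P_PM[OF q2 s0 s2])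
    finally show "norm (?F t - ?G t) \<le> err" .
  qed auto
  hence Db: "norm (integral {\<alpha>..\<beta>} ?F - integral {\<alpha>..\<beta>} ?G) \<le> tol"
    using errb ab integral_diff[OF iF iG] by (simp add: mult.commute)
  have GI: "integral {\<alpha>..\<beta>} ?G = complex_of_real (N^2) * (\<Sum>m<M. \<Sum>m'<M. complex_of_real (cf q s x m * cf q s x m') *
      integral {\<alpha>..\<beta>} (\<lambda>t. cis ((\<omega> - real q ^ (2*m) + real q ^ (2*m')) * t)))"
    unfolding N_def by (rule PM_integral[OF q2 s0 s2])
  have msb: "\<bar>cf q s x n\<bar> * \<bar>cf q s x k\<bar> * (\<beta> - \<alpha>) - 4 * A * \<bar>cf q s x n\<bar> / real q ^ (2*k)
           - 4 * A^2 / real q ^ (2*n)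
         \<le> norm (\<Sum>m<M. \<Sum>m'<M. complex_of_real (cf q s x m * cf q s x m') *
              integral {\<alpha>..\<beta>} (\<lambda>t. cis ((\<omega> - real q ^ (2*m) + real q ^ (2*m')) * t)))"
    unfolding A_def \<omega>_def using main_sum_bound[OF q2 s0 s2 kn nM ab, of x] by simp
  have "\<kappa> * lam ^ n \<le> (\<bar>cf q s x k\<bar> * (\<beta> - \<alpha>) - 4 * A / real q ^ (2*k)) * \<bar>cf q s x n\<bar>"
    by (rule mult_mono) (use cn ck k0 l0 in \<open>auto simp: A_def\<close>)
  hence k2: "\<kappa> * lam ^ n - 4 * A^2 / real q ^ (2*n) \<le> norm (\<Sum>m<M. \<Sum>m'<M. complex_of_real (cf q s x m * cf q s x m') *
              integral {\<alpha>..\<beta>} (\<lambda>t. cis ((\<omega> - real q ^ (2*m) + real q ^ (2*m')) * t)))"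
    using msb by (simp add: algebra_simps)
  have nG: "norm (integral {\<alpha>..\<beta>} ?G) = N^2 * norm (\<Sum>m<M. \<Sum>m'<M. complex_of_real (cf q s x m * cf q s x m') *
              integral {\<alpha>..\<beta>} (\<lambda>t. cis ((\<omega> - real q ^ (2*m) + real q ^ (2*m')) * t)))"
    unfolding GI norm_mult norm_of_real by simp
  have "N^2 * (\<kappa> * lam ^ n - 4 * A^2 / real q ^ (2*n)) \<le> norm (integral {\<alpha>..\<beta>} ?G)"
    unfolding nG by (rule mult_left_mono[OF k2]) simp
  moreover have "norm (integral {\<alpha>..\<beta>} ?G) - tol \<le> norm (integral {\<alpha>..\<beta>} ?F)"
  proof -
    have "norm (integral {\<alpha>..\<beta>} ?G) - norm (integral {\<alpha>..\<beta>} ?F) \<le> norm (integral {\<alpha>..\<beta>} ?G - integral {\<alpha>..\<beta>} ?F)"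
      by (rule norm_triangle_ineq2)
    also have "\<dots> = norm (integral {\<alpha>..\<beta>} ?F - integral {\<alpha>..\<beta>} ?G)" by (rule norm_minus_commute)
    finally show ?thesis using Db by linarith
  qed
  ultimately have "N^2 * (\<kappa> * lam ^ n - 4 * A^2 / real q ^ (2*n)) - tol \<le> norm (integral {\<alpha>..\<beta>} ?F)" by simp
  moreover have "N^2 * (\<kappa> * lam ^ n - 4 * A^2 / real q ^ (2*n)) - tol = N^2 * (\<kappa> * lam ^ n - 5 * A^2 / real q ^ (2*n))"
    unfolding tol_def by (simp add: field_simps)
  ultimately show ?thesis unfolding N_def A_def \<omega>_def by simp
qed

end


context
  fixes q :: nat and s :: real
  assumes q2: "2 \<le> q" and s0: "0 < s" and s2: "s < 2"
begin

lemma holder_P':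
  assumes b0: "0 < \<beta>" and b1: "\<beta> < 1 - s/2"
  shows "\<exists>C\<ge>0. \<forall>t t'. \<bar>Pdens q s x t - Pdens q s x t'\<bar> \<le> C * \<bar>t - t'\<bar> powr \<beta>"
proof -
  have g1: "rq q s * real q powr (2*\<beta>) < 1"
  proof -
    have "rq q s * real q powr (2*\<beta>) = real q powr (s - 2 + 2*\<beta>)" unfolding rq_def by (simp add: powr_add)
    also have "\<dots> < 1" using q_ge2[OF q2 s0 s2] b1 by (intro powr_less_one) auto
    finally show ?thesis .
  qed
  have "0 \<le> 2 * BB q s * (NormConst q s * 2 / (1 - rq q s * real q powr (2*\<beta>)))"
    using BB_nonneg[OF q2 s0 s2] N_nonneg[OF q2 s0 s2] g1 by simp
  thus ?thesis using holder_P[OF q2 s0 s2 b0 b1] by blast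
qed

lemma finite_box:
  assumes d0: "0 < \<delta>" and ab: "a \<le> b"
  shows "finite (box_set \<delta> ((\<lambda>t. (t, Pdens q s x t)) ` {a..b}))"
proof -
  define \<beta> where "\<beta> = (1 - s/2) / 2"
  have b0: "0 < \<beta>" and b1: "\<beta> < 1 - s/2" unfolding \<beta>_def using s2 by auto
  obtain C where C: "C \<ge> 0" "\<And>t t'. \<bar>Pdens q s x t - Pdens q s x t'\<bar> \<le> C * \<bar>t - t'\<bar> powr \<beta>"
    using holder_P'[OF b0 b1] by blast
  have H: "\<bar>Pdens q s x t - Pdens q s x t'\<bar> \<le> C * \<delta> powr \<beta>" if "\<bar>t - t'\<bar> \<le> \<delta>" for t t'
  proof -
    have "\<bar>t - t'\<bar> powr \<beta> \<le> \<delta> powr \<beta>" using that b0 by (intro powr_mono2) auto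
    thus ?thesis using C(2)[of t t'] mult_left_mono[OF _ C(1)] by (meson order_trans)
  qed
  show ?thesis by (rule box_upper(1)[OF d0 ab _ H]) (use C(1) in simp)
qed

lemma box_lower_seq:
  assumes ab: "a < b" and e0: "0 < e" and es: "e < s"
    and good: "\<And>n. n \<ge> N0 \<Longrightarrow> (real q powr (-e)) ^ n \<le> \<bar>sin (real q ^ n * x)\<bar>"
  shows "\<exists>C>0. \<exists>k n1. k < n1 \<and> (\<forall>n\<ge>n1.
           C * (rq q s * real q powr (-e)) ^ n * (real q ^ (2*n))^2
             \<le> real (box_count (2 * pi / (real q ^ (2*n) - real q ^ (2*k))) ((\<lambda>t. (t, Pdens q s x t)) ` {a..b})))"
proof -
  define lam where "lam = rq q s * real q powr (-e)"
  define W where "W = (\<lambda>m::nat. real q ^ (2*m))"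
  define A where "A = AA q s"
  define N where "N = NormConst q s"
  have qg: "2 \<le> real q" using q2 by simp
  have lam0: "0 < lam" unfolding lam_def using r_pos[OF q2 s0 s2] qg by simp
  have Wp: "0 < W m" for m unfolding W_def using qg by simp
  have Ap: "0 < A" unfolding A_def by (rule AA_pos[OF q2 s0 s2])
  have Np: "0 < N" unfolding N_def by (rule N_pos[OF q2 s0 s2])
  have lamW: "lam ^ m * W m = (real q powr (s - e)) ^ m" for m
  proof -
    have q2p: "real q ^ 2 = real q powr 2" using qg by (simp add: powr_numeral)
    have "lam * real q ^ 2 = real q powr (s - 2) * real q powr (-e) * real q powr 2"
      unfolding lam_def rq_def q2p ..
    also have "\<dots> = real q powr (s - 2 + -e + 2)" by (simp only: powr_add)
    also have "s - 2 + -e + 2 = s - e" by simp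
    finally have "lam * real q ^ 2 = real q powr (s - e)" .
    hence "(lam * real q ^ 2) ^ m = (real q powr (s - e)) ^ m" by simp
    thus ?thesis unfolding W_def by (simp add: power_mult_distrib power_mult)
  qed
  have L1: "1 < real q powr (s - e)" using qg es by simp
  have Wbig: "\<exists>M. \<forall>m\<ge>M. y \<le> W m" for y
  proof -
    have "(2::real)^2 \<le> real q ^ 2" by (rule power_mono[OF qg]) simp
    hence "1 < real q ^ 2" by simp
    then obtain M where "\<forall>m\<ge>M. y \<le> (real q ^ 2) ^ m" using pow_ev_large by blast
    thus ?thesis unfolding W_def by (auto simp: power_mult)
  qed
  have cfl: "lam ^ m \<le> \<bar>cf q s x m\<bar>" if "m \<ge> N0" for m
  proof -
    have "\<bar>cf q s x m\<bar> = (rq q s) ^ m * \<bar>sin (real q ^ m * x)\<bar>"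
      unfolding cf_eq[OF q2 s0 s2] using r_pos[OF q2 s0 s2] by (simp add: abs_mult)
    moreover have "(rq q s) ^ m * (real q powr (-e)) ^ m \<le> (rq q s) ^ m * \<bar>sin (real q ^ m * x)\<bar>"
      using good[OF that] r_pos[OF q2 s0 s2] by (intro mult_left_mono) auto
    ultimately show ?thesis unfolding lam_def by (simp add: power_mult_distrib)
  qed
  obtain K0 where K0: "\<forall>m\<ge>K0. 32 * A / (b - a) \<le> (real q powr (s - e)) ^ m"
    using pow_ev_large[OF L1] by blast
  define k where "k = max N0 K0"
  have kN0: "k \<ge> N0" unfolding k_def by simp
  have kbig: "32 * A / (b - a) \<le> lam ^ k * W k" unfolding lamW using K0 unfolding k_def by simp
  define \<kappa> where "\<kappa> = lam ^ k * (b - a) / 4"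
  have kap0: "0 < \<kappa>" unfolding \<kappa>_def using lam0 ab by simp
  have kapb: "\<kappa> \<le> \<bar>cf q s x k\<bar> * (\<beta> - \<alpha>) - 4 * A / W k" if "(b - a) / 2 \<le> \<beta> - \<alpha>" for \<alpha> \<beta>
  proof -
    have "32 * A \<le> lam ^ k * W k * (b - a)" using kbig ab by (simp add: field_simps)
    hence f1: "32 * (A / W k) \<le> lam ^ k * (b - a)" using Wp[of k] by (simp add: field_simps)
    have "lam ^ k * ((b - a) / 2) \<le> \<bar>cf q s x k\<bar> * (\<beta> - \<alpha>)"
      using cfl[OF kN0] that lam0 ab by (intro mult_mono) auto
    hence f2: "lam ^ k * (b - a) \<le> 2 * (\<bar>cf q s x k\<bar> * (\<beta> - \<alpha>))" by simp
    have f3: "0 \<le> A / W k" using Ap Wp[of k] by simp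
    have "4 * A / W k = 4 * (A / W k)" by simp
    thus ?thesis unfolding \<kappa>_def using f1 f2 f3 by linarith
  qed
  define C0 where "C0 = N^2 * \<kappa> * 9 / (128 * pi^2)"
  have C0p: "0 < C0" unfolding C0_def using Np kap0 by simp
  obtain n2 where n2: "\<forall>m\<ge>n2. 10 * A^2 / \<kappa> \<le> (real q powr (s - e)) ^ m"
    using pow_ev_large[OF L1] by blast
  obtain n3 where n3: "\<forall>m\<ge>n3. (b - a) / (pi * C0) \<le> (real q powr (s - e)) ^ m"
    using pow_ev_large[OF L1] by blast
  obtain n4 where n4: "\<forall>m\<ge>n4. 32 * pi / (3 * (b - a)) \<le> W m" using Wbig by blast
  define n1 where "n1 = max (max (k+1) N0) (max n2 (max n3 n4))"
  have "k < n1" unfolding n1_def by simp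
  moreover have "C0 / 2 * lam ^ n * (W n)^2 \<le> real (box_count (2 * pi / (W n - W k)) ((\<lambda>t. (t, Pdens q s x t)) ` {a..b}))"
    if nn1: "n \<ge> n1" for n
  proof -
    have kn: "k < n" and nN0: "n \<ge> N0" using nn1 unfolding n1_def by auto
    have Wkn: "4 * W k \<le> W n" unfolding W_def by (rule W_grow[OF q2 s0 s2 kn])
    define \<delta> where "\<delta> = 2 * pi / (W n - W k)"
    define \<omega> where "\<omega> = W n - W k"
    have om: "3 / 4 * W n \<le> \<omega>" unfolding \<omega>_def using Wkn Wp[of k] by simp
    have omp: "0 < \<omega>" using om Wp[of n] by simp
    have d0: "0 < \<delta>" unfolding \<delta>_def using omp \<omega>_def by simp
    have wd: "\<omega> * \<delta> = 2 * pi" unfolding \<delta>_def \<omega>_def using omp \<omega>_def by simp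
    have dup: "\<delta> \<le> 8 * pi / (3 * W n)"
    proof -
      have "\<delta> = 2 * pi / \<omega>" unfolding \<delta>_def \<omega>_def ..
      also have "\<dots> \<le> 2 * pi / (3 / 4 * W n)" using om Wp[of n] by (intro divide_left_mono) auto
      finally show ?thesis by (simp add: field_simps)
    qed
    have dlo: "2 * pi / W n \<le> \<delta>"
    proof -
      have "\<omega> \<le> W n" unfolding \<omega>_def using Wp[of k] by simp
      hence "2 * pi / W n \<le> 2 * pi / \<omega>" using omp by (intro divide_left_mono) auto
      thus ?thesis unfolding \<delta>_def \<omega>_def .
    qed
    have dab: "\<delta> \<le> (b - a) / 4"
    proof -
      have "32 * pi / (3 * (b - a)) \<le> W n" using n4 nn1 unfolding n1_def by simp
      hence "32 * pi \<le> W n * (3 * (b - a))" using ab by (simp add: field_simps)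
      hence "8 * pi / (3 * W n) \<le> (b - a) / 4" using Wp[of n] by (simp add: field_simps)
      thus ?thesis using dup by simp
    qed
    define j0 where "j0 = \<lceil>a / \<delta>\<rceil>"
    define j1 where "j1 = \<lfloor>b / \<delta>\<rfloor>"
    define c where "c = of_int j0 * \<delta>"
    define K where "K = nat (j1 - j0)"
    have ac: "a \<le> c" unfolding c_def j0_def using d0 by (simp add: pos_divide_le_eq[symmetric])
    have c_up: "c \<le> a + \<delta>"
    proof -
      have "of_int j0 \<le> a / \<delta> + 1" unfolding j0_def by linarith
      thus ?thesis unfolding c_def using d0 by (simp add: field_simps)
    qed
    have j1lo: "b - \<delta> \<le> of_int j1 * \<delta>"
    proof -
      have "b / \<delta> - 1 \<le> of_int j1" unfolding j1_def by linarith
      thus ?thesis using d0 by (simp add: field_simps)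
    qed
    have j1up: "of_int j1 * \<delta> \<le> b"
      unfolding j1_def using d0 by (simp add: pos_le_divide_eq[symmetric])
    have jj: "j0 \<le> j1"
    proof -
      have "c \<le> b - \<delta>" using c_up dab ab by simp
      hence "of_int j0 * \<delta> \<le> of_int j1 * \<delta>" using j1lo unfolding c_def by simp
      thus ?thesis using d0 by simp
    qed
    have Kr: "real K = of_int (j1 - j0)" unfolding K_def using jj by simp
    have Kd: "c + real K * \<delta> = of_int j1 * \<delta>"
      unfolding Kr c_def by (simp add: algebra_simps)
    have cb: "c + real K * \<delta> \<le> b" using Kd j1up by simp
    have Klen: "(b - a) / 2 \<le> real K * \<delta>" using Kd j1lo c_up dab by simp
    have Kup: "real K \<le> (b - a) / \<delta>"
    proof -
      have "real K * \<delta> \<le> b - a" using cb ac by simp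
      thus ?thesis using d0 by (simp add: field_simps)
    qed
    let ?G = "(\<lambda>t. (t, Pdens q s x t)) ` {a..b}"
    have fin: "finite (box_set \<delta> ?G)" by (rule finite_box[OF d0]) (use ab in simp)
    have bl: "norm (integral {c..c + real K * \<delta>} (\<lambda>t. complex_of_real (Pdens q s x t) * cis (\<omega> * t))) / \<delta>^2 - real K
         \<le> real (card (box_set \<delta> ?G))"
      by (rule box_lower[OF d0 cont_P[OF q2 s0 s2] ac cb c_def wd fin])
    have kapc: "\<kappa> \<le> \<bar>cf q s x k\<bar> * (c + real K * \<delta> - c) - 4 * AA q s / real q ^ (2*k)"
      using kapb[where \<alpha>=c and \<beta>="c + real K * \<delta>"] Klen unfolding A_def W_def by simp
    have il: "N^2 * (\<kappa> * lam ^ n - 5 * A^2 / W n)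
       \<le> norm (integral {c..c + real K * \<delta>} (\<lambda>t. complex_of_real (Pdens q s x t) * cis (\<omega> * t)))"
      using integral_lower[OF q2 s0 s2 kn _ cfl[OF nN0] kapc less_imp_le[OF kap0] less_imp_le[OF lam0]] d0
      unfolding N_def A_def W_def \<omega>_def by simp
    have half: "\<kappa> * lam ^ n / 2 \<le> \<kappa> * lam ^ n - 5 * A^2 / W n"
    proof -
      have "10 * A^2 / \<kappa> \<le> lam ^ n * W n" unfolding lamW using n2 nn1 unfolding n1_def by simp
      hence "10 * A^2 \<le> \<kappa> * (lam ^ n * W n)" using kap0 by (simp add: field_simps)
      hence "10 * A^2 / W n \<le> \<kappa> * lam ^ n" using Wp[of n] by (simp add: field_simps)
      thus ?thesis by simp
    qed
    have I2: "N^2 * (\<kappa> * lam ^ n / 2) \<le> norm (integral {c..c + real K * \<delta>} (\<lambda>t. complex_of_real (Pdens q s x t) * cis (\<omega> * t)))"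
      using il half Np by (meson mult_left_mono order_trans zero_le_power2)
    have inv2: "9 * (W n)^2 / (64 * pi^2) \<le> 1 / \<delta>^2"
    proof -
      have "\<delta>^2 \<le> (8 * pi / (3 * W n))^2" using dup d0 by (intro power_mono) auto
      moreover have "0 < (8 * pi / (3 * W n))^2 * \<delta>^2" using d0 Wp[of n] by simp
      ultimately have "1 / (8 * pi / (3 * W n))^2 \<le> 1 / \<delta>^2" by (intro divide_left_mono) auto
      thus ?thesis using Wp[of n] by (simp add: field_simps power2_eq_square)
    qed
    have inv1: "1 / \<delta> \<le> W n / (2 * pi)"
    proof -
      have "1 / \<delta> \<le> 1 / (2 * pi / W n)" using dlo Wp[of n] d0 by (intro divide_left_mono) auto
      thus ?thesis by simp
    qed
    have "C0 * lam ^ n * (W n)^2 = N^2 * (\<kappa> * lam ^ n / 2) * (9 * (W n)^2 / (64 * pi^2))"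
      unfolding C0_def by (simp add: field_simps power2_eq_square)
    also have "\<dots> \<le> norm (integral {c..c + real K * \<delta>} (\<lambda>t. complex_of_real (Pdens q s x t) * cis (\<omega> * t))) * (1 / \<delta>^2)"
      using I2 inv2 Np kap0 lam0 by (intro mult_mono) auto
    finally have m1: "C0 * lam ^ n * (W n)^2 \<le> norm (integral {c..c + real K * \<delta>} (\<lambda>t. complex_of_real (Pdens q s x t) * cis (\<omega> * t))) / \<delta>^2"
      by simp
    have m2: "real K \<le> C0 / 2 * lam ^ n * (W n)^2"
    proof -
      have "(b - a) / (pi * C0) \<le> lam ^ n * W n" unfolding lamW using n3 nn1 unfolding n1_def by simp
      hence "(b - a) \<le> pi * C0 * (lam ^ n * W n)" using C0p by (simp add: field_simps)
      hence "(b - a) * (W n / (2*pi)) \<le> pi * C0 * (lam ^ n * W n) * (W n / (2*pi))"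
        by (rule mult_right_mono) (use Wp[of n] in simp)
      also have "\<dots> = C0 / 2 * lam ^ n * (W n)^2" by (simp add: power2_eq_square field_simps)
      finally have "(b - a) * W n / (2 * pi) \<le> C0 / 2 * lam ^ n * (W n)^2" by simp
      moreover have "real K \<le> (b - a) * W n / (2 * pi)"
      proof -
        have "(b - a) * (1 / \<delta>) \<le> (b - a) * (W n / (2 * pi))" by (rule mult_left_mono[OF inv1]) (use ab in simp)
        thus ?thesis using Kup by simp
      qed
      ultimately show ?thesis by simp
    qed
    have "C0 / 2 * lam ^ n * (W n)^2 \<le> real (card (box_set \<delta> ?G))" using m1 m2 bl by simp
    thus ?thesis unfolding \<delta>_def box_count_eq .
  qed
  ultimately show ?thesis using C0p unfolding lam_def W_def
    by (intro exI[of _ "C0/2"]) auto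
qed

end


context
  fixes q :: nat and s :: real
  assumes q2: "2 \<le> q" and s0: "0 < s" and s2: "s < 2"
begin

lemma card_upper_powr:
  assumes ab: "a \<le> b" and b0: "0 < \<beta>" and b1: "\<beta> < 1 - s/2"
  shows "\<exists>D>0. \<forall>\<delta>. 0 < \<delta> \<and> \<delta> \<le> 1 \<longrightarrow>
           real (box_count \<delta> ((\<lambda>t. (t, Pdens q s x t)) ` {a..b})) \<le> D * \<delta> powr (\<beta> - 2)"
proof -
  obtain C where C: "C \<ge> 0" "\<And>t t'. \<bar>Pdens q s x t - Pdens q s x t'\<bar> \<le> C * \<bar>t - t'\<bar> powr \<beta>"
    using holder_P'[OF q2 s0 s2 b0 b1] by blast
  define D where "D = (b - a + 2) * (2 * C + 2)"
  have Dp: "0 < D" unfolding D_def using ab C(1) by simp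
  have "real (box_count \<delta> ((\<lambda>t. (t, Pdens q s x t)) ` {a..b})) \<le> D * \<delta> powr (\<beta> - 2)"
    if d0: "0 < \<delta>" and d1: "\<delta> \<le> 1" for \<delta>
  proof -
    define h where "h = C * \<delta> powr \<beta>"
    have h0: "0 \<le> h" unfolding h_def using C(1) by simp
    have H: "\<bar>Pdens q s x t - Pdens q s x t'\<bar> \<le> h" if "\<bar>t - t'\<bar> \<le> \<delta>" for t t'
    proof -
      have "\<bar>t - t'\<bar> powr \<beta> \<le> \<delta> powr \<beta>" using that b0 by (intro powr_mono2) auto
      thus ?thesis unfolding h_def using C(2)[of t t'] mult_left_mono[OF _ C(1)] by (meson order_trans)
    qed
    have cb: "real (card (box_set \<delta> ((\<lambda>t. (t, Pdens q s x t)) ` {a..b}))) \<le> ((b - a) / \<delta> + 2) * (2 * h / \<delta> + 2)"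
      by (rule box_upper(2)[OF d0 ab h0 H])
    have f1: "(b - a) / \<delta> + 2 \<le> (b - a + 2) / \<delta>"
    proof -
      have "2 \<le> 2 / \<delta>" using d0 d1 by (simp add: field_simps)
      thus ?thesis by (simp add: add_divide_distrib)
    qed
    have pe: "\<delta> powr \<beta> / \<delta> = \<delta> powr (\<beta> - 1)" using d0 by (simp add: powr_diff)
    have p1: "1 \<le> \<delta> powr (\<beta> - 1)"
    proof -
      have u1: "\<delta> powr (1 - \<beta>) \<le> 1" using d0 d1 b1 s0 by (intro powr_le1) auto
      have eq: "\<delta> powr (\<beta> - 1) = 1 / \<delta> powr (1 - \<beta>)" using d0 by (simp add: powr_minus_divide[symmetric])
      have u0: "0 < \<delta> powr (1 - \<beta>)" using d0 by simp
      have "1 \<le> 1 / \<delta> powr (1 - \<beta>)" using u1 u0 by (simp add: le_divide_eq)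
      thus ?thesis using eq by simp
    qed
    have f2: "2 * h / \<delta> + 2 \<le> (2 * C + 2) * \<delta> powr (\<beta> - 1)"
    proof -
      have "2 * h / \<delta> = 2 * C * \<delta> powr (\<beta> - 1)" unfolding h_def pe[symmetric] by simp
      thus ?thesis using p1 by (simp add: algebra_simps)
    qed
    have "((b - a) / \<delta> + 2) * (2 * h / \<delta> + 2) \<le> (b - a + 2) / \<delta> * ((2 * C + 2) * \<delta> powr (\<beta> - 1))"
      using f1 f2 ab d0 h0 by (intro mult_mono) auto
    also have "\<dots> = D * (\<delta> powr (\<beta> - 1) / \<delta>)" unfolding D_def by (simp add: field_simps)
    also have "\<delta> powr (\<beta> - 1) / \<delta> = \<delta> powr (\<beta> - 2)"
    proof -
      have "\<delta> powr (\<beta> - 2) = \<delta> powr ((\<beta> - 1) - 1)" by simp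
      also have "\<dots> = \<delta> powr (\<beta> - 1) / \<delta> powr 1" by (rule powr_diff)
      finally show ?thesis using d0 by simp
    qed
    finally show ?thesis using cb unfolding box_count_eq by simp
  qed
  thus ?thesis using Dp by blast
qed

lemma upper_dim:
  assumes ab: "a \<le> b"
  shows "upper_box_dim ((\<lambda>t. (t, Pdens q s x t)) ` {a..b}) \<le> ereal (1 + s/2)"
  unfolding upper_box_dim_def Limsup_le_iff
proof (intro allI impI)
  fix y :: ereal assume y: "ereal (1 + s/2) < y"
  obtain z :: real where z1: "1 + s/2 < z" and zy: "ereal z \<le> y"
  proof (cases y)
    case (real r) thus ?thesis using y that[of r] by auto
  next
    case PInf thus ?thesis using that[of "2 + s"] s0 by auto
  next
    case MInf thus ?thesis using y by auto
  qed
  define \<beta> where "\<beta> = (max (2 - z) 0 + (1 - s/2)) / 2"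
  have b0: "0 < \<beta>" and b1: "\<beta> < 1 - s/2" and b2: "2 - z < \<beta>"
    unfolding \<beta>_def using z1 s2 by (auto simp: max_def)
  obtain D where Dp: "0 < D" and D: "\<And>\<delta>. 0 < \<delta> \<Longrightarrow> \<delta> \<le> 1 \<Longrightarrow>
      real (box_count \<delta> ((\<lambda>t. (t, Pdens q s x t)) ` {a..b})) \<le> D * \<delta> powr (\<beta> - 2)"
    using card_upper_powr[OF ab b0 b1, of x] by blast
  define g where "g = z - 2 + \<beta>"
  have g0: "0 < g" unfolding g_def using b2 by simp
  define d0 where "d0 = min (1/2) (exp (- (\<bar>ln D\<bar> / g + 1)))"
  have d0p: "0 < d0" unfolding d0_def by simp
  show "\<forall>\<^sub>F \<delta> in at_right 0. ereal (ln (real (box_count \<delta> ((\<lambda>t. (t, Pdens q s x t)) ` {a..b}))) / ln (1 / \<delta>)) < y"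
    unfolding eventually_at_right_field
  proof (intro exI[of _ d0] conjI allI impI d0p)
    fix \<delta> :: real assume dpos: "0 < \<delta>" and dd: "\<delta> < d0"
    let ?c = "real (box_count \<delta> ((\<lambda>t. (t, Pdens q s x t)) ` {a..b}))"
    have d1: "\<delta> < 1/2" using dd unfolding d0_def by simp
    have dexp: "\<delta> < exp (- (\<bar>ln D\<bar> / g + 1))" using dd unfolding d0_def by simp
    define L where "L = ln (1 / \<delta>)"
    have Lgt: "\<bar>ln D\<bar> / g + 1 < L"
    proof -
      have "ln \<delta> < ln (exp (- (\<bar>ln D\<bar> / g + 1)))"
        by (rule ln_less_cancel_iff[OF dpos exp_gt_zero, THEN iffD2, OF dexp])
      hence "ln \<delta> < - (\<bar>ln D\<bar> / g + 1)" by simp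
      thus ?thesis unfolding L_def using dpos by (simp add: ln_div)
    qed
    have "0 \<le> \<bar>ln D\<bar> / g" using g0 by simp
    hence L0: "0 < L" using Lgt by linarith
    have "ln ?c / L < z"
    proof (cases "?c = 0")
      case True thus ?thesis using z1 s0 by simp
    next
      case False
      hence cpos: "0 < ?c" by simp
      have "?c \<le> D * \<delta> powr (\<beta> - 2)" using D[OF dpos] d1 by simp
      hence "ln ?c \<le> ln (D * \<delta> powr (\<beta> - 2))" using cpos by simp
      also have "\<dots> = ln D + (\<beta> - 2) * ln \<delta>" using Dp dpos by (simp add: ln_mult)
      also have "\<dots> = ln D + (2 - \<beta>) * L" unfolding L_def using dpos by (simp add: ln_div algebra_simps)
      finally have lc: "ln ?c \<le> ln D + (2 - \<beta>) * L" .
      have "ln D < g * L"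
      proof -
        have "\<bar>ln D\<bar> < g * L" using Lgt g0 by (simp add: field_simps)
        thus ?thesis by simp
      qed
      hence "ln ?c < (z - 2 + \<beta>) * L + (2 - \<beta>) * L" using lc unfolding g_def by simp
      hence "ln ?c < z * L" by (simp add: algebra_simps)
      thus ?thesis using L0 by (simp add: field_simps)
    qed
    hence "ereal (ln ?c / ln (1 / \<delta>)) < ereal z" unfolding L_def by simp
    thus "ereal (ln ?c / ln (1 / \<delta>)) < y" using zy by (rule order.strict_trans2)
  qed
qed

end


context
  fixes q :: nat and s :: real
  assumes q2: "2 \<le> q" and s0: "0 < s" and s2: "s < 2"
begin

lemma delta_facts:
  assumes kn: "k < n"
  shows "0 < 2 * pi / (real q ^ (2*n) - real q ^ (2*k))"
    and "2 * pi / real q ^ (2*n) \<le> 2 * pi / (real q ^ (2*n) - real q ^ (2*k))"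
    and "2 * pi / (real q ^ (2*n) - real q ^ (2*k)) \<le> 8 * pi / (3 * real q ^ (2*n))"
proof -
  have Wkn: "4 * real q ^ (2*k) \<le> real q ^ (2*n)" by (rule W_grow[OF q2 s0 s2 kn])
  have Wk: "0 < real q ^ (2*k)" and Wn: "0 < real q ^ (2*n)" using q2 by auto
  have om: "3 / 4 * real q ^ (2*n) \<le> real q ^ (2*n) - real q ^ (2*k)" using Wkn Wk by simp
  have omp: "0 < real q ^ (2*n) - real q ^ (2*k)" using Wkn Wk by linarith
  show "0 < 2 * pi / (real q ^ (2*n) - real q ^ (2*k))" using omp by simp
  show "2 * pi / real q ^ (2*n) \<le> 2 * pi / (real q ^ (2*n) - real q ^ (2*k))"
    using omp Wk Wn by (intro divide_left_mono) (auto intro: mult_pos_pos)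
  have "2 * pi / (real q ^ (2*n) - real q ^ (2*k)) \<le> 2 * pi / (3 / 4 * real q ^ (2*n))"
    using om Wn omp by (intro divide_left_mono) (auto intro: mult_pos_pos)
  thus "2 * pi / (real q ^ (2*n) - real q ^ (2*k)) \<le> 8 * pi / (3 * real q ^ (2*n))" by (simp add: field_simps)
qed

lemma lower_dim:
  assumes ab: "a < b"
    and good: "\<forall>j. \<exists>N0. \<forall>n\<ge>N0. (real q powr (- inverse (real (Suc j)))) ^ n \<le> \<bar>sin (real q ^ n * x)\<bar>"
  shows "ereal (1 + s/2) \<le> lower_box_dim ((\<lambda>t. (t, Pdens q s x t)) ` {a..b})"
  unfolding lower_box_dim_def le_Liminf_iff
proof (intro allI impI)
  fix y :: ereal assume y: "y < ereal (1 + s/2)"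
  obtain z :: real where yz: "y < ereal z" and z0: "0 < z" and z1: "z < 1 + s/2"
  proof (cases y)
    case (real r)
    show ?thesis
    proof (cases "r < 1")
      case True thus ?thesis using that[of 1] real s0 by auto
    next
      case False thus ?thesis using that[of "(r + 1 + s/2)/2"] real y by auto
    qed
  next
    case PInf thus ?thesis using y by auto
  next
    case MInf thus ?thesis using that[of 1] s0 by auto
  qed
  define \<epsilon>0 where "\<epsilon>0 = min s (2 + s - 2 * z)"
  have e0p: "0 < \<epsilon>0" unfolding \<epsilon>0_def using s0 z1 by simp
  obtain j where j: "inverse (real (Suc j)) < \<epsilon>0" using reals_Archimedean[OF e0p] by blast
  define e where "e = inverse (real (Suc j))"
  have e0: "0 < e" unfolding e_def by simp
  have es: "e < s" and ez: "e < 2 + s - 2 * z" using j unfolding e_def \<epsilon>0_def by auto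
  obtain N0 where N0: "\<And>n. n \<ge> N0 \<Longrightarrow> (real q powr (-e)) ^ n \<le> \<bar>sin (real q ^ n * x)\<bar>"
    using good unfolding e_def by blast
  obtain C k n1 where Cp: "0 < C" and kn1: "k < n1" and Cb: "\<And>n. n \<ge> n1 \<Longrightarrow>
           C * (rq q s * real q powr (-e)) ^ n * (real q ^ (2*n))^2
             \<le> real (box_count (2 * pi / (real q ^ (2*n) - real q ^ (2*k))) ((\<lambda>t. (t, Pdens q s x t)) ` {a..b}))"
    using box_lower_seq[OF q2 s0 s2 ab e0 es N0] by blast
  define G where "G = (\<lambda>t. (t, Pdens q s x t)) ` {a..b}"
  define dl where "dl = (\<lambda>n. 2 * pi / (real q ^ (2*n) - real q ^ (2*k)))"
  define W where "W = (\<lambda>n::nat. real q ^ (2*n))"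
  define lq where "lq = ln (real q)"
  have qg: "2 \<le> real q" using q2 by simp
  have lq0: "0 < lq" unfolding lq_def using qg by simp
  define Lm where "Lm = rq q s * real q powr (-e) * real q ^ 4"
  have Lmp: "0 < Lm" unfolding Lm_def using r_pos[OF q2 s0 s2] qg by simp
  have LmW: "(rq q s * real q powr (-e)) ^ n * (W n)^2 = Lm ^ n" for n
    unfolding Lm_def W_def by (simp add: power_mult_distrib power_mult[symmetric] algebra_simps)
  have lnLm: "ln Lm = (s + 2 - e) * lq"
  proof -
    have "ln Lm = ln (rq q s) + ln (real q powr (-e)) + ln (real q ^ 4)"
      unfolding Lm_def using r_pos[OF q2 s0 s2] qg by (simp add: ln_mult)
    also have "\<dots> = (s - 2) * lq + (-e) * lq + 4 * lq"
      unfolding rq_def lq_def using qg by (simp add: ln_realpow)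
    finally show ?thesis by (simp add: algebra_simps)
  qed
  define \<gamma> where "\<gamma> = ln Lm - 2 * z * lq"
  have geq: "\<gamma> = (s + 2 - e - 2 * z) * lq" unfolding \<gamma>_def lnLm by (simp add: algebra_simps)
  have "0 < s + 2 - e - 2 * z" using ez by simp
  hence g0: "0 < \<gamma>" unfolding geq using lq0 by simp
  obtain nA :: nat where nA: "(2 * z * lq - ln (C / 9)) / \<gamma> < real nA" using reals_Archimedean2 by blast
  obtain nB where nB: "\<forall>m\<ge>nB. 12 \<le> (real q ^ 2) ^ m"
  proof -
    have "(2::real)^2 \<le> real q ^ 2" by (rule power_mono[OF qg]) simp
    hence "1 < real q ^ 2" by simp
    thus ?thesis using pow_ev_large that by blast
  qed
  define n2 where "n2 = max n1 (max nA nB)"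
  have n2k: "k < n2" using kn1 unfolding n2_def by simp
  have Wge: "12 \<le> W m" if "m \<ge> nB" for m using nB that unfolding W_def by (simp add: power_mult)
  have dl_small: "dl m < 1" if "k < m" "m \<ge> nB" for m
  proof -
    have "dl m \<le> 8 * pi / (3 * W m)" unfolding dl_def W_def by (rule delta_facts(3)[OF that(1)])
    also have "\<dots> \<le> 8 * pi / (3 * 12)" using Wge[OF that(2)] by (intro divide_left_mono) auto
    also have "\<dots> < 1" using pi_less_4 by simp
    finally show ?thesis .
  qed
  have d0p: "0 < dl n2" unfolding dl_def by (rule delta_facts(1)[OF n2k])
  show "\<forall>\<^sub>F \<delta> in at_right 0. y < ereal (ln (real (box_count \<delta> ((\<lambda>t. (t, Pdens q s x t)) ` {a..b}))) / ln (1 / \<delta>))"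
    unfolding eventually_at_right_field
  proof (intro exI[of _ "dl n2"] conjI allI impI d0p)
    fix \<delta> :: real assume dpos: "0 < \<delta>" and dd: "\<delta> < dl n2"
    obtain m0 where m0: "n2 \<le> m0" "dl m0 \<le> \<delta>"
    proof -
      obtain M where M: "\<forall>m\<ge>M. 8 * pi / (3 * \<delta>) \<le> (real q ^ 2) ^ m"
      proof -
        have "(2::real)^2 \<le> real q ^ 2" by (rule power_mono[OF qg]) simp
        hence "1 < real q ^ 2" by simp
        thus ?thesis using pow_ev_large that by blast
      qed
      define m where "m = max M (n2 + 1)"
      have km: "k < m" using n2k unfolding m_def by simp
      have "8 * pi / (3 * \<delta>) \<le> W m" using M unfolding m_def W_def by (simp add: power_mult)
      hence "8 * pi / (3 * W m) \<le> \<delta>" using dpos W_def qg by (simp add: field_simps)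
      moreover have "dl m \<le> 8 * pi / (3 * W m)" unfolding dl_def W_def by (rule delta_facts(3)[OF km])
      ultimately show ?thesis using that[of m] unfolding m_def by simp
    qed
    define m where "m = (LEAST m. n2 \<le> m \<and> dl m \<le> \<delta>)"
    have mP: "n2 \<le> m \<and> dl m \<le> \<delta>" unfolding m_def by (rule LeastI[of _ m0]) (use m0 in simp)
    have mne: "m \<noteq> n2" using mP dd by auto
    then obtain n where mn: "m = Suc n" and nn2: "n2 \<le> n" using mP by (cases m) auto
    have dln: "\<delta> < dl n"
    proof (rule ccontr)
      assume "\<not> \<delta> < dl n"
      hence "n2 \<le> n \<and> dl n \<le> \<delta>" using nn2 by simp
      hence "m \<le> n" unfolding m_def by (rule Least_le)
      thus False using mn by simp
    qed
    have dlSn: "dl (Suc n) \<le> \<delta>" using mP mn by simp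
    have kn: "k < n" using n2k nn2 by simp
    have nn1: "n \<ge> n1" using nn2 unfolding n2_def by simp
    have finb: "finite (box_set \<delta> G)" unfolding G_def by (rule finite_box[OF q2 s0 s2 dpos]) (use ab in simp)
    have cmp: "box_count (dl n) G \<le> 9 * box_count \<delta> G"
      unfolding box_count_eq by (rule box_compare[OF dpos less_imp_le[OF dln] finb])
    have ceq: "C * (rq q s * real q powr (-e)) ^ n * (real q ^ (2*n))^2 = C * Lm ^ n"
      using LmW[of n] unfolding W_def by (simp add: mult.assoc)
    have cn: "C * Lm ^ n \<le> real (box_count (dl n) G)"
      using Cb[OF nn1] unfolding ceq dl_def G_def .
    have cdel: "C / 9 * Lm ^ n \<le> real (box_count \<delta> G)"
    proof -
      have "real (box_count (dl n) G) \<le> 9 * real (box_count \<delta> G)" using cmp by linarith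
      thus ?thesis using cn by simp
    qed
    have cpos: "0 < C / 9 * Lm ^ n" using Cp Lmp by simp
    have lnc: "ln (C / 9) + real n * ln Lm \<le> ln (real (box_count \<delta> G))"
    proof -
      have "ln (C / 9 * Lm ^ n) \<le> ln (real (box_count \<delta> G))" using cdel cpos by simp
      moreover have "ln (C / 9 * Lm ^ n) = ln (C / 9) + real n * ln Lm"
        using Cp Lmp ln_mult[of "C/9" "Lm^n"] ln_realpow[of Lm n] by simp
      ultimately show ?thesis by simp
    qed
    define L where "L = ln (1 / \<delta>)"
    have "nB \<le> n2" unfolding n2_def by simp
    hence d1: "\<delta> < 1" using dd dl_small[OF n2k] by force
    have L0: "0 < L" unfolding L_def using dpos d1 by simp
    have Lup: "L \<le> 2 * real (Suc n) * lq"
    proof -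
      have "2 * pi / W (Suc n) \<le> dl (Suc n)" unfolding dl_def W_def by (rule delta_facts(2)) (use kn in simp)
      hence "2 * pi / W (Suc n) \<le> \<delta>" using dlSn by simp
      hence "1 / \<delta> \<le> W (Suc n) / (2 * pi)" using dpos W_def qg by (simp add: field_simps)
      also have "\<dots> \<le> W (Suc n) / 1"
      proof (rule divide_left_mono)
        show "0 \<le> W (Suc n)" unfolding W_def using qg by simp
        show "1 \<le> 2 * pi" using pi_gt3 by simp
        show "0 < 2 * pi * 1" by simp
      qed
      also have "\<dots> = W (Suc n)" by simp
      finally have le: "1 / \<delta> \<le> W (Suc n)" .
      have "ln (1 / \<delta>) \<le> ln (W (Suc n))"
        by (rule ln_le_cancel_iff[THEN iffD2, OF _ _ le]) (use dpos qg in \<open>simp_all add: W_def\<close>)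
      also have "ln (W (Suc n)) = 2 * real (Suc n) * lq" unfolding W_def lq_def by (simp only: ln_realpow)
      finally show ?thesis unfolding L_def .
    qed
    have key: "z * L < ln (real (box_count \<delta> G))"
    proof -
      have "real nA \<le> real n" using nn2 unfolding n2_def by simp
      hence "(2 * z * lq - ln (C / 9)) / \<gamma> < real n" using nA by simp
      hence "2 * z * lq - ln (C / 9) < real n * \<gamma>" using g0 by (simp add: field_simps)
      hence "2 * z * real (Suc n) * lq < ln (C / 9) + real n * ln Lm" unfolding \<gamma>_def by (simp add: algebra_simps)
      moreover have "z * L \<le> z * (2 * real (Suc n) * lq)" using Lup z0 by (intro mult_left_mono) auto
      moreover have "z * (2 * real (Suc n) * lq) = 2 * z * real (Suc n) * lq" by (simp only: mult_ac)
      ultimately show ?thesis using lnc by linarith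
    qed
    have "z < ln (real (box_count \<delta> G)) / L" using key L0 by (simp add: field_simps)
    hence "ereal z < ereal (ln (real (box_count \<delta> G)) / L)" by simp
    thus "y < ereal (ln (real (box_count \<delta> ((\<lambda>t. (t, Pdens q s x t)) ` {a..b}))) / ln (1 / \<delta>))"
      using order.strict_trans[OF yz] unfolding G_def L_def by blast
  qed
qed

end


lemma sin_lower_pos: assumes "0 \<le> z" "z \<le> pi/2" shows "z / 4 \<le> sin z"
proof (cases "z \<le> pi/3")
  case True
  show ?thesis
  proof (cases "z = 0")
    case True thus ?thesis by simp
  next
    case False
    hence z0: "0 < z" using assms by simp
    obtain \<xi> where \<xi>: "0 < \<xi>" "\<xi> < z" "sin z - sin 0 = (z - 0) * cos \<xi>"
      using MVT2[OF z0, of sin cos] by (auto intro: DERIV_sin)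
    have "cos (pi/3) \<le> cos \<xi>" using \<xi> True by (intro cos_monotone_0_pi_le) auto
    hence "1/2 \<le> cos \<xi>" by (simp add: cos_60)
    hence "z * (1/2) \<le> z * cos \<xi>" using z0 by (intro mult_left_mono) auto
    thus ?thesis using \<xi>(3) z0 by simp
  qed
next
  case False
  have "sin (pi/3) \<le> sin z" using False assms by (intro sin_monotone_2pi_le) auto
  hence "sqrt 3 / 2 \<le> sin z" by (simp add: sin_60)
  moreover have "z / 4 \<le> 1/2" using assms pi_less_4 by simp
  moreover have "1/2 \<le> sqrt 3 / 2" by simp
  ultimately show ?thesis by linarith
qed

lemma sin_lower: assumes "\<bar>z\<bar> \<le> pi/2" shows "\<bar>z\<bar> / 4 \<le> \<bar>sin z\<bar>"
proof (cases "0 \<le> z")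
  case True thus ?thesis using sin_lower_pos[of z] assms by simp
next
  case False
  hence "-z / 4 \<le> sin (-z)" using sin_lower_pos[of "-z"] assms by simp
  thus ?thesis using False by simp
qed

lemma sin_small_near:
  fixes y :: real
  assumes "\<bar>sin y\<bar> < \<eta>"
  shows "\<bar>y - real_of_int \<lfloor>y / pi + 1/2\<rfloor> * pi\<bar> < 4 * \<eta>"
proof -
  define k where "k = \<lfloor>y / pi + 1/2\<rfloor>"
  define z where "z = y - real_of_int k * pi"
  have k1: "real_of_int k \<le> y / pi + 1/2" and k2: "y / pi + 1/2 < real_of_int k + 1"
    unfolding k_def by linarith+
  have "\<bar>z\<bar> \<le> pi/2"
  proof -
    have "real_of_int k * pi \<le> y + pi/2" using k1 pi_gt_zero by (simp add: field_simps)
    moreover have "y - pi/2 < real_of_int k * pi" using k2 pi_gt_zero by (simp add: field_simps)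
    ultimately show ?thesis unfolding z_def abs_le_iff by linarith
  qed
  hence "\<bar>z\<bar> / 4 \<le> \<bar>sin z\<bar>" by (rule sin_lower)
  moreover have "\<bar>sin z\<bar> = \<bar>sin y\<bar>"
  proof -
    have sk: "sin (real_of_int k * pi) = 0" using sin_zero_iff_int2 by blast
    have ck: "\<bar>cos (real_of_int k * pi)\<bar> = 1" by (rule sin_zero_abs_cos_one[OF sk])
    have "sin y = sin (z + real_of_int k * pi)" unfolding z_def by simp
    also have "\<dots> = sin z * cos (real_of_int k * pi)" by (simp add: sin_add sk)
    finally show ?thesis using ck by (simp add: abs_mult)
  qed
  ultimately show ?thesis using assms unfolding z_def k_def by simp
qed

lemma set_cover:
  fixes q :: nat
  assumes q1: "1 \<le> q" and e0: "0 < \<eta>"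
  shows "{x \<in> {0..pi}. \<bar>sin (real q ^ n * x)\<bar> < \<eta>} \<subseteq>
         (\<Union>k\<in>{0..q^n}. {(real k * pi - 4 * \<eta>) / real q ^ n .. (real k * pi + 4 * \<eta>) / real q ^ n})"
proof
  fix x assume "x \<in> {x \<in> {0..pi}. \<bar>sin (real q ^ n * x)\<bar> < \<eta>}"
  hence x0: "0 \<le> x" and xpi: "x \<le> pi" and sx: "\<bar>sin (real q ^ n * x)\<bar> < \<eta>" by auto
  define Q where "Q = real q ^ n"
  have Q1: "1 \<le> Q" unfolding Q_def using q1 by simp
  define y where "y = Q * x"
  define k where "k = \<lfloor>y / pi + 1/2\<rfloor>"
  have near: "\<bar>y - real_of_int k * pi\<bar> < 4 * \<eta>" unfolding k_def y_def Q_def by (rule sin_small_near[OF sx])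
  have y0: "0 \<le> y" unfolding y_def using x0 Q1 by simp
  have ypi: "y \<le> Q * pi" unfolding y_def using xpi Q1 by (intro mult_left_mono) auto
  have k0: "0 \<le> k" unfolding k_def using y0 pi_gt_zero by simp
  have "y / pi \<le> Q" using ypi pi_gt_zero by (simp add: divide_le_eq)
  hence "y / pi + 1/2 < Q + 1" by linarith
  hence "y / pi + 1/2 < of_int (int (q ^ n) + 1)" unfolding Q_def by simp
  hence "k < int (q ^ n) + 1" unfolding k_def by (simp only: floor_less_iff)
  hence "k \<le> int (q ^ n)" by simp
  hence kq: "nat k \<in> {0..q^n}" using k0 by (simp add: nat_le_iff)
  have rk: "real (nat k) = real_of_int k" using k0 by simp
  have "(real (nat k) * pi - 4 * \<eta>) / Q \<le> x \<and> x \<le> (real (nat k) * pi + 4 * \<eta>) / Q"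
    using near Q1 unfolding rk y_def by (auto simp: field_simps abs_less_iff)
  thus "x \<in> (\<Union>k\<in>{0..q^n}. {(real k * pi - 4 * \<eta>) / real q ^ n .. (real k * pi + 4 * \<eta>) / real q ^ n})"
    using kq unfolding Q_def by auto
qed

lemma meas_set: "{x \<in> {0..pi}. \<bar>sin (real q ^ n * x)\<bar> < (\<eta>::real)} \<in> sets lborel"
  by measurable

lemma meas_bound:
  fixes q :: nat
  assumes q1: "1 \<le> q" and e0: "0 < \<eta>"
  shows "measure lborel {x \<in> {0..pi}. \<bar>sin (real q ^ n * x)\<bar> < \<eta>} \<le> 16 * \<eta>"
proof -
  define Q where "Q = real q ^ n"
  have Q1: "1 \<le> Q" unfolding Q_def using q1 by simp
  define I where "I = (\<lambda>k::nat. {(real k * pi - 4 * \<eta>) / Q .. (real k * pi + 4 * \<eta>) / Q})"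
  have sub: "{x \<in> {0..pi}. \<bar>sin (real q ^ n * x)\<bar> < \<eta>} \<subseteq> (\<Union>k\<in>{0..q^n}. I k)"
    unfolding I_def Q_def by (rule set_cover[OF q1 e0])
  have fm: "(\<Union>k\<in>{0..q^n}. I k) \<in> fmeasurable lborel"
    by (intro fmeasurable_compact compact_UN) (auto simp: I_def)
  have "measure lborel {x \<in> {0..pi}. \<bar>sin (real q ^ n * x)\<bar> < \<eta>} \<le> measure lborel (\<Union>k\<in>{0..q^n}. I k)"
    by (rule measure_mono_fmeasurable[OF sub meas_set fm])
  also have "\<dots> \<le> (\<Sum>k\<in>{0..q^n}. measure lborel (I k))"
    by (rule measure_UNION_le) (auto simp: I_def)
  also have "\<dots> = (\<Sum>k\<in>{0..q^n}. 8 * \<eta> / Q)"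
  proof (rule sum.cong[OF refl])
    fix k assume "k \<in> {0..q^n}"
    have "(real k * pi - 4 * \<eta>) / Q \<le> (real k * pi + 4 * \<eta>) / Q" using e0 Q1 by (intro divide_right_mono) auto
    hence "measure lborel (I k) = (real k * pi + 4 * \<eta>) / Q - (real k * pi - 4 * \<eta>) / Q"
      unfolding I_def by (rule measure_lborel_Icc)
    also have "\<dots> = 8 * \<eta> / Q" using Q1 by (simp add: field_simps)
    finally show "measure lborel (I k) = 8 * \<eta> / Q" .
  qed
  also have "\<dots> = (real (q^n) + 1) * (8 * \<eta> / Q)" by simp
  also have "\<dots> \<le> 16 * \<eta>"
  proof -
    have "(Q + 1) * (8 * \<eta> / Q) = 8 * \<eta> + 8 * \<eta> / Q" using Q1 by (simp add: field_simps)
    also have "8 * \<eta> / Q \<le> 8 * \<eta>" using Q1 e0 by (simp add: field_simps)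
    finally show ?thesis unfolding Q_def by simp
  qed
  finally show ?thesis .
qed

lemma AE_good:
  fixes q :: nat
  assumes q2: "2 \<le> q"
  shows "AE x in lborel. x \<in> {0..pi} \<longrightarrow>
     (\<forall>j. \<exists>N0. \<forall>n\<ge>N0. (real q powr (- inverse (real (Suc j)))) ^ n \<le> \<bar>sin (real q ^ n * x)\<bar>)"
proof -
  have "AE x in lborel. x \<in> {0..pi} \<longrightarrow> (\<exists>N0. \<forall>n\<ge>N0. (real q powr (- inverse (real (Suc j)))) ^ n \<le> \<bar>sin (real q ^ n * x)\<bar>)"
    for j
  proof -
    define \<rho> where "\<rho> = real q powr (- inverse (real (Suc j)))"
    have r0: "0 < \<rho>" unfolding \<rho>_def using q2 by simp
    have r1: "\<rho> < 1" unfolding \<rho>_def using q2 by (intro powr_less_one) auto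
    define A where "A = (\<lambda>n. {x \<in> {0..pi}. \<bar>sin (real q ^ n * x)\<bar> < \<rho> ^ n})"
    have As: "A n \<in> sets lborel" for n unfolding A_def by (rule meas_set)
    have Af: "emeasure lborel (A n) < \<infinity>" for n
    proof -
      have "emeasure lborel (A n) \<le> emeasure lborel {0..pi}" unfolding A_def by (rule emeasure_mono) auto
      also have "\<dots> < \<infinity>" by simp
      finally show ?thesis .
    qed
    have Am: "measure lborel (A n) \<le> 16 * \<rho> ^ n" for n
      unfolding A_def by (rule meas_bound) (use q2 r0 in auto)
    have sm: "summable (\<lambda>n. measure lborel (A n))"
      by (rule summable_comparison_test[OF _ summable_mult[OF summable_geometric[of \<rho>]]])
         (use Am r0 r1 in auto)
    have "AE x in lborel. eventually (\<lambda>n. x \<in> space lborel - A n) sequentially"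
      by (rule borel_cantelli_AE1[OF As Af sm])
    thus ?thesis
    proof (rule AE_mp, intro AE_I2 impI)
      fix x assume ev: "eventually (\<lambda>n. x \<in> space lborel - A n) sequentially" and x: "x \<in> {0..pi}"
      then obtain N0 where "\<forall>n\<ge>N0. x \<notin> A n" unfolding eventually_sequentially by auto
      hence "\<forall>n\<ge>N0. \<rho> ^ n \<le> \<bar>sin (real q ^ n * x)\<bar>" using x unfolding A_def by (auto simp: not_less)
      thus "\<exists>N0. \<forall>n\<ge>N0. (real q powr (- inverse (real (Suc j)))) ^ n \<le> \<bar>sin (real q ^ n * x)\<bar>"
        unfolding \<rho>_def by blast
    qed
  qed
  hence "AE x in lborel. \<forall>j. x \<in> {0..pi} \<longrightarrow> (\<exists>N0. \<forall>n\<ge>N0. (real q powr (- inverse (real (Suc j)))) ^ n \<le> \<bar>sin (real q ^ n * x)\<bar>)"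
    by (subst AE_all_countable) blast
  thus ?thesis by (rule AE_mp) (intro AE_I2, blast)
qed


theorem theorem1:
  fixes q :: nat and s :: real
  assumes "q \<ge> 2" and "0 < s" and "s < 2"
  shows "AE x in lborel. x \<in> {0..pi} \<longrightarrow>
           (\<forall>a b :: real. a < b \<longrightarrow>
              has_box_dim ((\<lambda>t. (t, Pdens q s x t)) ` {a..b}) (1 + s / 2))"
proof -
  have q2: "2 \<le> q" and s0: "0 < s" and s2: "s < 2" using assms by auto
  show ?thesis
    using AE_good[OF q2]
  proof (rule AE_mp, intro AE_I2 impI allI)
    fix x a b :: real
    assume good: "x \<in> {0..pi} \<longrightarrow>
       (\<forall>j. \<exists>N0. \<forall>n\<ge>N0. (real q powr (- inverse (real (Suc j)))) ^ n \<le> \<bar>sin (real q ^ n * x)\<bar>)"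
      and x: "x \<in> {0..pi}" and ab: "a < b"
    let ?G = "(\<lambda>t. (t, Pdens q s x t)) ` {a..b}"
    have up: "upper_box_dim ?G \<le> ereal (1 + s/2)" by (rule upper_dim[OF q2 s0 s2]) (use ab in simp)
    have lo: "ereal (1 + s/2) \<le> lower_box_dim ?G" by (rule lower_dim[OF q2 s0 s2 ab]) (use good x in blast)
    have "lower_box_dim ?G \<le> upper_box_dim ?G"
      unfolding lower_box_dim_def upper_box_dim_def by (rule Liminf_le_Limsup) simp
    hence "upper_box_dim ?G = ereal (1 + s/2) \<and> lower_box_dim ?G = ereal (1 + s/2)"
      using up lo by auto
    thus "has_box_dim ?G (1 + s / 2)" unfolding has_box_dim_def by simp
  qed
qed

end
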